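(* Define $\hat\psi,\hat\psi^*$ on horizontal edges of the lattice slit-strip by $\hat\psi(x'+iy)=T^{-y}\psi_{x'}T^{y}$, $\hat\psi^*(x'+iy)=T^{-y}\psi^*_{x'}T^{y}$ and $\hat\psi(x'-iy)=(T^{slit})^{y}\psi_{x'}(T^{slit})^{-y}$, $\hat\psi^*(x'-iy)=(T^{slit})^{y}\psi^*_{x'}(T^{slit})^{-y}$ for $x'\in C^*$, $y\in\mathbb Z_{\ge0}$. There exist unique extensions $\hat\psi,\hat\psi^*:E_{slit}\to\mathrm{CliffGen}$ to all edges of the slit-strip such that: for any edges $z_1,z_2$ adjacent to a common vertex $v$ and a common face with centre $p$ of the slit-strip, $\hat\psi(z_1)+\frac{i|v-p|}{v-p}\hat\psi^*(z_1)=\hat\psi(z_2)+\frac{i|v-p|}{v-p}\hat\psi^*(z_2)$; and $\hat\psi(L)+i\hat\psi^*(L)=0$ for every left boundary edge $L$ and $\hat\psi(R)-i\hat\psi^*(R)=0$ for every right boundary edge $R$.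
   Context: Fix integers $a<0<b$, $C=\{a,\dots,b\}$, $C^*=\{a+\frac12,\dots,b-\frac12\}$. $\tilde V$ has orthonormal basis $(e_\rho)_{\rho\in\{\pm1\}^C}$. For $x'\in C^*$, $\varsigma_{x'}(\rho)$ flips the signs of $\rho_x$ for $x<x'$; $\psi_{x'}e_\rho=\frac{-\rho_{x'-1/2}+i\rho_{x'+1/2}}{\sqrt2}e_{\varsigma_{x'}(\rho)}$, $\psi^*_{x'}e_\rho=\frac{-i\rho_{x'-1/2}+\rho_{x'+1/2}}{\sqrt2}e_{\varsigma_{x'}(\rho)}$; $\mathrm{CliffGen}$ is their complex span. With $\beta=\frac12\log(\sqrt2+1)$: $T_h^{1/2}$ is diagonal with entries $\exp(\frac\beta2\sum_{x=a}^{b-1}\rho_x\rho_{x+1})$; $e_\tau^\dagger T_ve_\rho=\exp(\beta\sum_{x=a}^b\rho_x\tau_x)\delta_{\tau_a\rho_a}\delta_{\tau_b\rho_b}$; $e_\tau^\dagger T^{slit}_ve_\rho=\exp(\beta\sum_{x=a}^b\rho_x\tau_x)\delta_{\tau_a\rho_a}\delta_{\tau_0\rho_0}\delta_{\tau_b\rho_b}$; $T=T_h^{1/2}T_vT_h^{1/2}$ and $T^{slit}=T_h^{1/2}T^{slit}_vT_h^{1/2}$ (both invertible). The lattice slit-strip is the multigraph with vertices $C\times\mathbb Z\subset\mathbb C$ and nearest-neighbour edges $E_{slit}$, except that each edge between $-iy$ and $-i(y+1)$, $y\in\mathbb Z_{\ge0}$, is doubled, one copy being the left side ($0^-$) and the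 other the right side ($0^+$) of the slit; faces adjacent to the slit use the copy on their side. Left boundary edges are the vertical edges $a+iy'$ and the slit edges on the right side $0^++iy'$ ($y'<0$); right boundary edges are the vertical edges $b+iy'$ and the slit edges on the left side $0^-+iy'$ ($y'<0$), $y'\in\mathbb Z+\frac12$. *)

theory Defs
  imports Complex_Main
begin

text \<open>A spin configuration rho in {+1,-1}^C, C = {a..b}, is represented as an
  integer-valued function with values in {-1,1} on C and 0 outside C.\<close>
definition Conf :: "int \<Rightarrow> int \<Rightarrow> (int \<Rightarrow> int) set" where
  "Conf a b = {\<rho>. (\<forall>x\<in>{a..b}. \<rho> x \<in> {-1, 1}) \<and> (\<forall>x. x \<notin> {a..b} \<longrightarrow> \<rho> x = 0)}"

text \<open>Linear operators on V~ are given by their matrices M tau rho = e_tau^dagger M e_rho;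
  entries outside Conf a b are required to vanish (extensional matrices).\<close>
type_synonym op = "(int \<Rightarrow> int) \<Rightarrow> (int \<Rightarrow> int) \<Rightarrow> complex"

definition Ops :: "int \<Rightarrow> int \<Rightarrow> op set" where
  "Ops a b = {M. \<forall>\<tau> \<rho>. \<not> (\<tau> \<in> Conf a b \<and> \<rho> \<in> Conf a b) \<longrightarrow> M \<tau> \<rho> = 0}"

definition mk_op :: "int \<Rightarrow> int \<Rightarrow> op \<Rightarrow> op" where
  "mk_op a b M = (\<lambda>\<tau> \<rho>. if \<tau> \<in> Conf a b \<and> \<rho> \<in> Conf a b then M \<tau> \<rho> else 0)"

definition mmult :: "int \<Rightarrow> int \<Rightarrow> op \<Rightarrow> op \<Rightarrow> op" where
  "mmult a b M N = mk_op a b (\<lambda>\<tau> \<rho>. \<Sum>\<sigma>\<in>Conf a b. M \<tau> \<sigma> * N \<sigma> \<rho>)"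

definition mid :: "int \<Rightarrow> int \<Rightarrow> op" where
  "mid a b = mk_op a b (\<lambda>\<tau> \<rho>. if \<tau> = \<rho> then 1 else 0)"

definition madd :: "op \<Rightarrow> op \<Rightarrow> op" where
  "madd M N = (\<lambda>\<tau> \<rho>. M \<tau> \<rho> + N \<tau> \<rho>)"

definition msc :: "complex \<Rightarrow> op \<Rightarrow> op" where
  "msc c M = (\<lambda>\<tau> \<rho>. c * M \<tau> \<rho>)"

definition mzero :: op where
  "mzero = (\<lambda>\<tau> \<rho>. 0)"

fun mpow :: "int \<Rightarrow> int \<Rightarrow> op \<Rightarrow> nat \<Rightarrow> op" where
  "mpow a b M 0 = mid a b"
| "mpow a b M (Suc n) = mmult a b M (mpow a b M n)"

definition minv :: "int \<Rightarrow> int \<Rightarrow> op \<Rightarrow> op" where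
  "minv a b M = (THE N. N \<in> Ops a b \<and> mmult a b M N = mid a b \<and> mmult a b N M = mid a b)"

text \<open>A half-integer x' in C^* is encoded by the integer k with x' = k + 1/2, a \<le> k < b.
  varsigma_{x'} flips rho_x for x < x', i.e. x \<le> k.\<close>
definition vsig :: "int \<Rightarrow> (int \<Rightarrow> int) \<Rightarrow> (int \<Rightarrow> int)" where
  "vsig k \<rho> = (\<lambda>x. if x \<le> k then - \<rho> x else \<rho> x)"

definition psi :: "int \<Rightarrow> int \<Rightarrow> int \<Rightarrow> op" where
  "psi a b k = mk_op a b (\<lambda>\<tau> \<rho>. if \<tau> = vsig k \<rho>
      then (- of_int (\<rho> k) + \<i> * of_int (\<rho> (k + 1))) / complex_of_real (sqrt 2) else 0)"

definition psis :: "int \<Rightarrow> int \<Rightarrow> int \<Rightarrow> op" where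
  "psis a b k = mk_op a b (\<lambda>\<tau> \<rho>. if \<tau> = vsig k \<rho>
      then (- \<i> * of_int (\<rho> k) + of_int (\<rho> (k + 1))) / complex_of_real (sqrt 2) else 0)"

definition CliffGen :: "int \<Rightarrow> int \<Rightarrow> op set" where
  "CliffGen a b = {M. \<exists>c d :: int \<Rightarrow> complex.
      M = (\<lambda>\<tau> \<rho>. \<Sum>k\<in>{a..<b}. c k * psi a b k \<tau> \<rho> + d k * psis a b k \<tau> \<rho>)}"

definition beta :: real where
  "beta = ln (sqrt 2 + 1) / 2"

definition Th_half :: "int \<Rightarrow> int \<Rightarrow> op" where
  "Th_half a b = mk_op a b (\<lambda>\<tau> \<rho>. if \<tau> = \<rho>
      then complex_of_real (exp (beta / 2 * (\<Sum>x\<in>{a..<b}. of_int (\<rho> x * \<rho> (x + 1))))) else 0)"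

definition Tv :: "int \<Rightarrow> int \<Rightarrow> op" where
  "Tv a b = mk_op a b (\<lambda>\<tau> \<rho>.
      complex_of_real (exp (beta * (\<Sum>x\<in>{a..b}. of_int (\<rho> x * \<tau> x))))
      * (if \<tau> a = \<rho> a \<and> \<tau> b = \<rho> b then 1 else 0))"

definition Tv_slit :: "int \<Rightarrow> int \<Rightarrow> op" where
  "Tv_slit a b = mk_op a b (\<lambda>\<tau> \<rho>.
      complex_of_real (exp (beta * (\<Sum>x\<in>{a..b}. of_int (\<rho> x * \<tau> x))))
      * (if \<tau> a = \<rho> a \<and> \<tau> 0 = \<rho> 0 \<and> \<tau> b = \<rho> b then 1 else 0))"

definition Tmat :: "int \<Rightarrow> int \<Rightarrow> op" where
  "Tmat a b = mmult a b (mmult a b (Th_half a b) (Tv a b)) (Th_half a b)"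

definition Tslit :: "int \<Rightarrow> int \<Rightarrow> op" where
  "Tslit a b = mmult a b (mmult a b (Th_half a b) (Tv_slit a b)) (Th_half a b)"

text \<open>Edges:
  Hor k y   : horizontal edge between k+iy and (k+1)+iy (midpoint (k+1/2)+iy), a \<le> k < b;
  Ver x m   : vertical edge between x+im and x+i(m+1) (midpoint x+i(m+1/2)), a \<le> x \<le> b,
              not on the slit (i.e. not x = 0 with m < 0);
  SlitM m   : left-side copy (0^-) of the slit edge between im and i(m+1), m < 0;
  SlitP m   : right-side copy (0^+) of the slit edge between im and i(m+1), m < 0.\<close>
datatype edge = Hor int int | Ver int int | SlitM int | SlitP int

definition Eslit :: "int \<Rightarrow> int \<Rightarrow> edge set" where
  "Eslit a b = {Hor k y | k y. a \<le> k \<and> k < b}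
     \<union> {Ver x m | x m. a \<le> x \<and> x \<le> b \<and> \<not> (x = 0 \<and> m < 0)}
     \<union> {SlitM m | m. m < 0} \<union> {SlitP m | m. m < 0}"

definition pt :: "int \<Rightarrow> int \<Rightarrow> complex" where
  "pt x y = Complex (of_int x) (of_int y)"

fun endpoints :: "edge \<Rightarrow> complex set" where
  "endpoints (Hor k y) = {pt k y, pt (k + 1) y}"
| "endpoints (Ver x m) = {pt x m, pt x (m + 1)}"
| "endpoints (SlitM m) = {pt 0 m, pt 0 (m + 1)}"
| "endpoints (SlitP m) = {pt 0 m, pt 0 (m + 1)}"

text \<open>The face with lower-left corner x+iy (a \<le> x < b); faces adjacent to the slit
  use the copy of the slit edge on their side.\<close>
definition face_edges :: "int \<Rightarrow> int \<Rightarrow> edge set" where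
  "face_edges x y = {Hor x y, Hor x (y + 1),
      (if x = 0 \<and> y < 0 then SlitP y else Ver x y),
      (if x + 1 = 0 \<and> y < 0 then SlitM y else Ver (x + 1) y)}"

definition face_centre :: "int \<Rightarrow> int \<Rightarrow> complex" where
  "face_centre x y = Complex (of_int x + 1/2) (of_int y + 1/2)"

definition hor_psi :: "int \<Rightarrow> int \<Rightarrow> (int \<Rightarrow> int \<Rightarrow> int \<Rightarrow> op) \<Rightarrow> int \<Rightarrow> int \<Rightarrow> op" where
  "hor_psi a b P k y =
     (if 0 \<le> y then
        mmult a b (mmult a b (mpow a b (minv a b (Tmat a b)) (nat y)) (P a b k)) (mpow a b (Tmat a b) (nat y))
      else
        mmult a b (mmult a b (mpow a b (Tslit a b) (nat (- y))) (P a b k)) (mpow a b (minv a b (Tslit a b)) (nat (- y))))"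

definition slit_ext :: "int \<Rightarrow> int \<Rightarrow> (edge \<Rightarrow> op) \<Rightarrow> (edge \<Rightarrow> op) \<Rightarrow> bool" where
  "slit_ext a b ph phs \<longleftrightarrow>
     (\<forall>e\<in>Eslit a b. ph e \<in> CliffGen a b \<and> phs e \<in> CliffGen a b)
   \<and> (\<forall>k y. a \<le> k \<and> k < b \<longrightarrow>
        ph (Hor k y) = hor_psi a b psi k y \<and> phs (Hor k y) = hor_psi a b psis k y)
   \<and> (\<forall>x y z1 z2 v. a \<le> x \<and> x < b \<and> z1 \<in> face_edges x y \<and> z2 \<in> face_edges x y
        \<and> v \<in> endpoints z1 \<and> v \<in> endpoints z2 \<longrightarrow>
        (let p = face_centre x y; c = \<i> * complex_of_real (cmod (v - p)) / (v - p) in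
          madd (ph z1) (msc c (phs z1)) = madd (ph z2) (msc c (phs z2))))
   \<and> (\<forall>m. madd (ph (Ver a m)) (msc \<i> (phs (Ver a m))) = mzero)
   \<and> (\<forall>m. m < 0 \<longrightarrow> madd (ph (SlitP m)) (msc \<i> (phs (SlitP m))) = mzero)
   \<and> (\<forall>m. madd (ph (Ver b m)) (msc (- \<i>) (phs (Ver b m))) = mzero)
   \<and> (\<forall>m. m < 0 \<longrightarrow> madd (ph (SlitM m)) (msc (- \<i>) (phs (SlitM m))) = mzero)"

end

theory Submission
  imports Defs "HOL-Library.FuncSet"
begin

lemma Conf_val: "\<rho> \<in> Conf a b \<Longrightarrow> a \<le> x \<Longrightarrow> x \<le> b \<Longrightarrow> \<rho> x = -1 \<or> \<rho> x = 1"
  unfolding Conf_def by auto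

lemma Conf_out: "\<rho> \<in> Conf a b \<Longrightarrow> \<not> (a \<le> x \<and> x \<le> b) \<Longrightarrow> \<rho> x = 0"
  unfolding Conf_def by auto

lemma Conf_eqI: "\<rho> \<in> Conf a b \<Longrightarrow> \<sigma> \<in> Conf a b \<Longrightarrow> (\<And>x. a \<le> x \<Longrightarrow> x \<le> b \<Longrightarrow> \<rho> x = \<sigma> x) \<Longrightarrow> \<rho> = \<sigma>"
  by (rule ext) (metis Conf_out)

lemma vsig_Conf: "\<rho> \<in> Conf a b \<Longrightarrow> vsig k \<rho> \<in> Conf a b"
  unfolding Conf_def vsig_def by auto

lemma vsig_vsig[simp]: "vsig k (vsig k \<rho>) = \<rho>"
  unfolding vsig_def by auto

lemma vsig_app: "vsig k \<rho> x = (if x \<le> k then - \<rho> x else \<rho> x)"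
  unfolding vsig_def by simp

lemma vsig_eq_iff: "(vsig k \<tau> = \<rho>) = (\<tau> = vsig k \<rho>)"
  by auto

definition cext :: "int \<Rightarrow> int \<Rightarrow> (int \<Rightarrow> int) \<Rightarrow> (int \<Rightarrow> int)" where
  "cext a b g = (\<lambda>x. if x \<in> {a..b} then g x else 0)"

lemma sum_Conf_PiE:
  "(\<Sum>\<sigma>\<in>Conf a b. f \<sigma>) = (\<Sum>g\<in>PiE {a..b} (\<lambda>_. {-1,1}). f (cext a b g))"
  by (rule sum.reindex_bij_witness[of _ "cext a b" "\<lambda>g. restrict g {a..b}"])
     (auto simp: Conf_def cext_def PiE_def extensional_def restrict_def fun_eq_iff intro!: arg_cong[where f=f])

lemma finite_Conf: "finite (Conf a b)"
proof -
  have "Conf a b = cext a b ` PiE {a..b} (\<lambda>_. {-1,1})"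
  proof (rule set_eqI, rule iffI)
    fix \<rho> assume r: "\<rho> \<in> Conf a b"
    hence "\<rho> = cext a b (restrict \<rho> {a..b})" by (auto simp: cext_def fun_eq_iff Conf_def)
    moreover have "restrict \<rho> {a..b} \<in> PiE {a..b} (\<lambda>_. {-1,1})" using r by (auto simp: Conf_def)
    ultimately show "\<rho> \<in> cext a b ` PiE {a..b} (\<lambda>_. {-1,1})" by blast
  next
    fix \<rho> assume "\<rho> \<in> cext a b ` PiE {a..b} (\<lambda>_. {-1,1})"
    thus "\<rho> \<in> Conf a b" by (auto simp: Conf_def cext_def PiE_def Pi_def)
  qed
  thus ?thesis by (simp add: finite_PiE)
qed

lemma sum_prod_Conf:
  fixes h :: "int \<Rightarrow> int \<Rightarrow> 'c :: comm_semiring_1"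
  shows "(\<Sum>\<sigma>\<in>Conf a b. \<Prod>x\<in>{a..b}. h x (\<sigma> x)) = (\<Prod>x\<in>{a..b}. h x (-1) + h x 1)"
proof -
  have "(\<Sum>\<sigma>\<in>Conf a b. \<Prod>x\<in>{a..b}. h x (\<sigma> x))
      = (\<Sum>g\<in>PiE {a..b} (\<lambda>_. {-1,1}). \<Prod>x\<in>{a..b}. h x (cext a b g x))"
    by (rule sum_Conf_PiE)
  also have "\<dots> = (\<Sum>g\<in>PiE {a..b} (\<lambda>_. {-1,1}). \<Prod>x\<in>{a..b}. h x (g x))"
    by (intro sum.cong refl prod.cong) (auto simp: cext_def)
  also have "\<dots> = (\<Prod>x\<in>{a..b}. \<Sum>y\<in>{-1,1}. h x y)"
    by (rule prod_sum_PiE[symmetric]) auto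
  also have "\<dots> = (\<Prod>x\<in>{a..b}. h x (-1) + h x 1)" by simp
  finally show ?thesis .
qed

section \<open>Operator algebra\<close>

lemma mk_op_Ops: "mk_op a b M \<in> Ops a b"
  unfolding Ops_def mk_op_def by auto

lemma mmult_Ops: "mmult a b M N \<in> Ops a b"
  unfolding mmult_def by (rule mk_op_Ops)

lemma mid_Ops: "mid a b \<in> Ops a b"
  unfolding mid_def by (rule mk_op_Ops)

lemma Ops_out: "M \<in> Ops a b \<Longrightarrow> \<not> (\<tau> \<in> Conf a b \<and> \<rho> \<in> Conf a b) \<Longrightarrow> M \<tau> \<rho> = 0"
  unfolding Ops_def by auto

lemma Ops_eqI: "M \<in> Ops a b \<Longrightarrow> N \<in> Ops a b \<Longrightarrow> (\<And>\<tau> \<rho>. \<tau> \<in> Conf a b \<Longrightarrow> \<rho> \<in> Conf a b \<Longrightarrow> M \<tau> \<rho> = N \<tau> \<rho>) \<Longrightarrow> M = N"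
  by (intro ext) (metis Ops_out)

lemma mmult_app: "\<tau> \<in> Conf a b \<Longrightarrow> \<rho> \<in> Conf a b \<Longrightarrow> mmult a b M N \<tau> \<rho> = (\<Sum>\<sigma>\<in>Conf a b. M \<tau> \<sigma> * N \<sigma> \<rho>)"
  unfolding mmult_def mk_op_def by simp

lemma mmult_out: "\<not> (\<tau> \<in> Conf a b \<and> \<rho> \<in> Conf a b) \<Longrightarrow> mmult a b M N \<tau> \<rho> = 0"
  unfolding mmult_def mk_op_def by auto

lemma mk_op_app: "\<tau> \<in> Conf a b \<Longrightarrow> \<rho> \<in> Conf a b \<Longrightarrow> mk_op a b M \<tau> \<rho> = M \<tau> \<rho>"
  unfolding mk_op_def by simp

lemma mmult_assoc: "mmult a b (mmult a b M N) P = mmult a b M (mmult a b N P)"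
proof (rule Ops_eqI[OF mmult_Ops mmult_Ops])
  fix \<tau> \<rho> assume t: "\<tau> \<in> Conf a b" and r: "\<rho> \<in> Conf a b"
  have "mmult a b (mmult a b M N) P \<tau> \<rho> = (\<Sum>\<sigma>\<in>Conf a b. (\<Sum>\<sigma>'\<in>Conf a b. M \<tau> \<sigma>' * N \<sigma>' \<sigma>) * P \<sigma> \<rho>)"
    using t r by (simp add: mmult_app cong: sum.cong)
  also have "\<dots> = (\<Sum>\<sigma>'\<in>Conf a b. M \<tau> \<sigma>' * (\<Sum>\<sigma>\<in>Conf a b. N \<sigma>' \<sigma> * P \<sigma> \<rho>))"
    by (simp add: sum_distrib_left sum_distrib_right mult.assoc) (rule sum.swap)
  also have "\<dots> = mmult a b M (mmult a b N P) \<tau> \<rho>"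
    using t r by (simp add: mmult_app cong: sum.cong)
  finally show "mmult a b (mmult a b M N) P \<tau> \<rho> = mmult a b M (mmult a b N P) \<tau> \<rho>" .
qed

lemma mid_app: "\<tau> \<in> Conf a b \<Longrightarrow> \<rho> \<in> Conf a b \<Longrightarrow> mid a b \<tau> \<rho> = (if \<tau> = \<rho> then 1 else 0)"
  unfolding mid_def mk_op_def by simp

lemma mid_left: "M \<in> Ops a b \<Longrightarrow> mmult a b (mid a b) M = M"
proof (rule Ops_eqI[OF mmult_Ops])
  fix \<tau> \<rho> assume M: "M \<in> Ops a b" and t: "\<tau> \<in> Conf a b" and r: "\<rho> \<in> Conf a b"
  have "mmult a b (mid a b) M \<tau> \<rho> = (\<Sum>\<sigma>\<in>Conf a b. (if \<tau> = \<sigma> then M \<sigma> \<rho> else 0))"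
    using t r by (auto simp: mmult_app mid_app intro!: sum.cong)
  also have "\<dots> = M \<tau> \<rho>" using t by (simp add: finite_Conf)
  finally show "mmult a b (mid a b) M \<tau> \<rho> = M \<tau> \<rho>" .
qed

lemma mid_right: "M \<in> Ops a b \<Longrightarrow> mmult a b M (mid a b) = M"
proof (rule Ops_eqI[OF mmult_Ops])
  fix \<tau> \<rho> assume M: "M \<in> Ops a b" and t: "\<tau> \<in> Conf a b" and r: "\<rho> \<in> Conf a b"
  have "mmult a b M (mid a b) \<tau> \<rho> = (\<Sum>\<sigma>\<in>Conf a b. (if \<sigma> = \<rho> then M \<tau> \<sigma> else 0))"
    using t r by (auto simp: mmult_app mid_app intro!: sum.cong)
  also have "\<dots> = M \<tau> \<rho>" using r by (simp add: finite_Conf)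
  finally show "mmult a b M (mid a b) \<tau> \<rho> = M \<tau> \<rho>" .
qed

lemma minv_eq:
  assumes "N \<in> Ops a b" "mmult a b M N = mid a b" "mmult a b N M = mid a b"
  shows "minv a b M = N"
  unfolding minv_def
proof (rule the_equality)
  show "N \<in> Ops a b \<and> mmult a b M N = mid a b \<and> mmult a b N M = mid a b" using assms by auto
next
  fix N' assume h: "N' \<in> Ops a b \<and> mmult a b M N' = mid a b \<and> mmult a b N' M = mid a b"
  have "N' = mmult a b N' (mid a b)" using h mid_right by metis
  also have "\<dots> = mmult a b N' (mmult a b M N)" using assms by simp
  also have "\<dots> = mmult a b (mmult a b N' M) N" by (simp add: mmult_assoc)
  also have "\<dots> = N" using h assms mid_left by metis
  finally show "N' = N" .
qed

lemma mpow_Ops: "mpow a b M n \<in> Ops a b"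
  by (cases n) (auto simp: mid_Ops mmult_Ops)

lemma mpow_Suc_right: "M \<in> Ops a b \<Longrightarrow> mpow a b M (Suc n) = mmult a b (mpow a b M n) M"
proof (induction n)
  case 0 thus ?case by (simp add: mid_left mid_right)
next
  case (Suc n)
  have "mpow a b M (Suc (Suc n)) = mmult a b M (mpow a b M (Suc n))" by simp
  also have "\<dots> = mmult a b M (mmult a b (mpow a b M n) M)" using Suc by simp
  also have "\<dots> = mmult a b (mpow a b M (Suc n)) M" by (simp add: mmult_assoc)
  finally show ?case .
qed

definition evl :: "(complex \<times> op) list \<Rightarrow> op" where
  "evl L = (\<lambda>\<tau> \<rho>. \<Sum>p\<leftarrow>L. fst p * snd p \<tau> \<rho>)"

lemma evl_Nil[simp]: "evl [] = (\<lambda>_ _. 0)" by (simp add: evl_def)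
lemma evl_Cons: "evl (p # L) = (\<lambda>\<tau> \<rho>. fst p * snd p \<tau> \<rho> + evl L \<tau> \<rho>)" by (simp add: evl_def)

lemma mmult_evl_left: "mmult a b P (evl L) = evl (map (\<lambda>p. (fst p, mmult a b P (snd p))) L)"
proof (induction L)
  case Nil show ?case by (simp add: mmult_def mk_op_def)
next
  case (Cons p L)
  have "mmult a b P (evl (p # L)) = (\<lambda>\<tau> \<rho>. fst p * mmult a b P (snd p) \<tau> \<rho> + mmult a b P (evl L) \<tau> \<rho>)"
    by (auto simp: evl_Cons mmult_def mk_op_def sum.distrib sum_distrib_left algebra_simps fun_eq_iff)
  thus ?case using Cons by (simp add: evl_Cons)
qed

lemma mmult_evl_right: "mmult a b (evl L) P = evl (map (\<lambda>p. (fst p, mmult a b (snd p) P)) L)"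
proof (induction L)
  case Nil show ?case by (simp add: mmult_def mk_op_def)
next
  case (Cons p L)
  have "mmult a b (evl (p # L)) P = (\<lambda>\<tau> \<rho>. fst p * mmult a b (snd p) P \<tau> \<rho> + mmult a b (evl L) P \<tau> \<rho>)"
    by (auto simp: evl_Cons mmult_def mk_op_def sum.distrib sum_distrib_left algebra_simps fun_eq_iff)
  thus ?case using Cons by (simp add: evl_Cons)
qed

lemma evl_Ops: "(\<And>p. p \<in> set L \<Longrightarrow> snd p \<in> Ops a b) \<Longrightarrow> evl L \<in> Ops a b"
  by (induction L) (auto simp: evl_Cons Ops_def)

definition cj :: "int \<Rightarrow> int \<Rightarrow> op \<Rightarrow> op \<Rightarrow> op \<Rightarrow> op" where
  "cj a b P Q A = mmult a b (mmult a b P A) Q"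

lemma cj_evl: "cj a b P Q (evl L) = evl (map (\<lambda>p. (fst p, cj a b P Q (snd p))) L)"
  by (simp add: cj_def mmult_evl_left mmult_evl_right o_def)

lemma cj_zero: "cj a b P Q (\<lambda>_ _. 0) = (\<lambda>_ _. 0)"
  by (simp add: cj_def mmult_def mk_op_def)

lemma cj_rel: "evl L = (\<lambda>_ _. 0) \<Longrightarrow> evl (map (\<lambda>p. (fst p, cj a b P Q (snd p))) L) = (\<lambda>_ _. 0)"
  by (metis cj_evl cj_zero)


section \<open>Transfer matrices\<close>

definition Gf :: "int \<Rightarrow> int \<Rightarrow> (int \<Rightarrow> int) \<Rightarrow> real" where
  "Gf a b \<rho> = exp (beta / 2 * (\<Sum>x\<in>{a..<b}. of_int (\<rho> x * \<rho> (x + 1))))"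

definition Sf :: "int \<Rightarrow> int \<Rightarrow> (int \<Rightarrow> int) \<Rightarrow> (int \<Rightarrow> int) \<Rightarrow> real" where
  "Sf a b \<tau> \<rho> = (\<Sum>x\<in>{a..b}. of_int (\<rho> x * \<tau> x))"

definition dl :: "int set \<Rightarrow> (int \<Rightarrow> int) \<Rightarrow> (int \<Rightarrow> int) \<Rightarrow> bool" where
  "dl D \<tau> \<rho> = (\<forall>d\<in>D. \<tau> d = \<rho> d)"

definition TvD :: "int \<Rightarrow> int \<Rightarrow> int set \<Rightarrow> op" where
  "TvD a b D = mk_op a b (\<lambda>\<tau> \<rho>. complex_of_real (exp (beta * Sf a b \<tau> \<rho>)) * (if dl D \<tau> \<rho> then 1 else 0))"

lemma Tv_TvD: "Tv a b = TvD a b {a, b}"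
  unfolding Tv_def TvD_def Sf_def dl_def by simp

lemma Tv_slit_TvD: "Tv_slit a b = TvD a b {a, 0, b}"
  unfolding Tv_slit_def TvD_def Sf_def dl_def by (simp add: conj_commute conj_left_commute)

definition Thi :: "int \<Rightarrow> int \<Rightarrow> op" where
  "Thi a b = mk_op a b (\<lambda>\<tau> \<rho>. if \<tau> = \<rho> then complex_of_real (1 / Gf a b \<rho>) else 0)"

lemma Th_Gf: "Th_half a b = mk_op a b (\<lambda>\<tau> \<rho>. if \<tau> = \<rho> then complex_of_real (Gf a b \<rho>) else 0)"
  unfolding Th_half_def Gf_def by simp

lemma diag_left:
  assumes "\<tau> \<in> Conf a b" "\<rho> \<in> Conf a b"
  shows "mmult a b (mk_op a b (\<lambda>\<tau> \<rho>. if \<tau> = \<rho> then g \<rho> else 0)) N \<tau> \<rho> = g \<tau> * N \<tau> \<rho>"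
proof -
  have "mmult a b (mk_op a b (\<lambda>\<tau> \<rho>. if \<tau> = \<rho> then g \<rho> else 0)) N \<tau> \<rho>
      = (\<Sum>\<sigma>\<in>Conf a b. if \<tau> = \<sigma> then g \<tau> * N \<sigma> \<rho> else 0)"
    using assms by (auto simp: mmult_app mk_op_app intro!: sum.cong)
  also have "\<dots> = g \<tau> * N \<tau> \<rho>" using assms by (simp add: finite_Conf)
  finally show ?thesis .
qed

lemma diag_right:
  assumes "\<tau> \<in> Conf a b" "\<rho> \<in> Conf a b"
  shows "mmult a b N (mk_op a b (\<lambda>\<tau> \<rho>. if \<tau> = \<rho> then g \<rho> else 0)) \<tau> \<rho> = N \<tau> \<rho> * g \<rho>"
proof -
  have "mmult a b N (mk_op a b (\<lambda>\<tau> \<rho>. if \<tau> = \<rho> then g \<rho> else 0)) \<tau> \<rho>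
      = (\<Sum>\<sigma>\<in>Conf a b. if \<sigma> = \<rho> then N \<tau> \<sigma> * g \<rho> else 0)"
    using assms by (auto simp: mmult_app mk_op_app intro!: sum.cong)
  also have "\<dots> = N \<tau> \<rho> * g \<rho>" using assms by (simp add: finite_Conf)
  finally show ?thesis .
qed

lemma Gf_pos: "Gf a b \<rho> > 0" unfolding Gf_def by simp

lemma Thi_Ops: "Thi a b \<in> Ops a b" unfolding Thi_def by (rule mk_op_Ops)
lemma Th_Ops: "Th_half a b \<in> Ops a b" unfolding Th_half_def by (rule mk_op_Ops)

lemma Th_Thi: "mmult a b (Th_half a b) (Thi a b) = mid a b"
  by (rule Ops_eqI[OF mmult_Ops mid_Ops])
     (simp add: Th_Gf Thi_def diag_left mk_op_app mid_app Gf_pos[THEN less_imp_neq, symmetric])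

lemma Thi_Th: "mmult a b (Thi a b) (Th_half a b) = mid a b"
  by (rule Ops_eqI[OF mmult_Ops mid_Ops])
     (simp add: Th_Gf Thi_def diag_left mk_op_app mid_app Gf_pos[THEN less_imp_neq, symmetric])

section \<open>The vertical transfer matrix as a product\<close>

definition kk :: "int set \<Rightarrow> int \<Rightarrow> int \<Rightarrow> int \<Rightarrow> complex" where
  "kk D x t s = complex_of_real (exp (beta * of_int (s * t))) * (if x \<in> D \<and> t \<noteq> s then 0 else 1)"

definition ww :: "int set \<Rightarrow> int \<Rightarrow> int \<Rightarrow> int \<Rightarrow> complex" where
  "ww D x t s = (if x \<in> D then (if t = s then complex_of_real (exp (- beta)) else 0)
       else complex_of_real (of_int (t * s) * exp (beta * of_int (t * s)) / 2))"

definition Tvi :: "int \<Rightarrow> int \<Rightarrow> int set \<Rightarrow> op" where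
  "Tvi a b D = mk_op a b (\<lambda>\<tau> \<rho>. \<Prod>x\<in>{a..b}. ww D x (\<tau> x) (\<rho> x))"

lemma prod_indicator:
  "finite A \<Longrightarrow> (\<Prod>x\<in>A. (if P x then 0 else 1 :: complex)) = (if \<exists>x\<in>A. P x then 0 else 1)"
  by (induction A rule: finite_induct) auto

lemma TvD_prod:
  assumes "D \<subseteq> {a..b}" "\<tau> \<in> Conf a b" "\<rho> \<in> Conf a b"
  shows "TvD a b D \<tau> \<rho> = (\<Prod>x\<in>{a..b}. kk D x (\<tau> x) (\<rho> x))"
proof -
  have "(\<Prod>x\<in>{a..b}. kk D x (\<tau> x) (\<rho> x))
     = (\<Prod>x\<in>{a..b}. complex_of_real (exp (beta * of_int (\<rho> x * \<tau> x)))) *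
       (\<Prod>x\<in>{a..b}. (if x \<in> D \<and> \<tau> x \<noteq> \<rho> x then 0 else 1))"
    unfolding kk_def by (rule prod.distrib)
  also have "(\<Prod>x\<in>{a..b}. complex_of_real (exp (beta * of_int (\<rho> x * \<tau> x))))
      = complex_of_real (exp (beta * Sf a b \<tau> \<rho>))"
    unfolding Sf_def of_real_prod[symmetric] sum_distrib_left exp_sum[OF finite_atLeastAtMost_int] ..
  also have "(\<Prod>x\<in>{a..b}. (if x \<in> D \<and> \<tau> x \<noteq> \<rho> x then 0 else 1 :: complex)) = (if dl D \<tau> \<rho> then 1 else 0)"
    using assms(1) by (subst prod_indicator) (auto simp: dl_def)
  finally show ?thesis using assms by (simp add: TvD_def mk_op_app)
qed

lemma exp_beta_sq: "exp beta * exp beta = sqrt 2 + 1"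
proof -
  have "exp beta * exp beta = exp (2 * beta)" by (simp add: exp_add[symmetric])
  also have "2 * beta = ln (sqrt 2 + 1)" by (simp add: beta_def)
  also have "exp \<dots> = sqrt 2 + 1" by (simp add: add_pos_pos)
  finally show ?thesis .
qed

lemma exp_mbeta: "exp (- beta) = 1 / exp beta" by (simp add: exp_minus field_simps)

lemma exp_beta_inv: "exp (-beta) * exp (-beta) = sqrt 2 - 1"
proof -
  have "exp (-beta) * exp (-beta) = 1 / (sqrt 2 + 1)" by (simp add: exp_mbeta exp_beta_sq[symmetric])
  also have "\<dots> = sqrt 2 - 1"
  proof -
    have "(sqrt 2 - 1) * (sqrt 2 + 1) = 1" by (simp add: algebra_simps)
    moreover have "sqrt 2 + 1 \<noteq> 0" by (smt (verit) real_sqrt_ge_zero)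
    ultimately show ?thesis by (simp add: divide_eq_eq)
  qed
  finally show ?thesis .
qed

lemma kk_ww_local:
  assumes "t \<in> {-1, 1}" "u \<in> {-1, 1}"
  shows "kk D x t (-1) * ww D x (-1) u + kk D x t 1 * ww D x 1 u = (if t = u then 1 else 0)"
proof (cases "x \<in> D")
  case True
  have "exp beta * exp (- beta) = 1" by (simp add: exp_add[symmetric])
  then show ?thesis using assms True
    by (auto simp: kk_def ww_def of_real_mult[symmetric] simp del: of_real_mult)
next
  case False
  have e1: "exp beta * exp (- beta) = 1" by (simp add: exp_add[symmetric])
  have e2: "exp beta * exp beta - exp (-beta) * exp (-beta) = 2" by (simp add: exp_beta_sq exp_beta_inv)
  show ?thesis using assms False
    apply (auto simp: kk_def ww_def)
    apply (simp_all add: of_real_mult[symmetric] of_real_add[symmetric] of_real_diff[symmetric] del: of_real_mult of_real_add of_real_diff)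
    using e1 e2 by (simp_all add: field_simps)
qed

lemma ww_kk_local:
  assumes "t \<in> {-1, 1}" "u \<in> {-1, 1}"
  shows "ww D x t (-1) * kk D x (-1) u + ww D x t 1 * kk D x 1 u = (if t = u then 1 else 0)"
proof -
  have "kk D x s u = kk D x u s" for s by (auto simp: kk_def mult.commute)
  moreover have "ww D x t s = ww D x s t" for s by (auto simp: ww_def mult.commute)
  ultimately show ?thesis using kk_ww_local[OF assms(2) assms(1), of D x] by (auto simp: mult.commute)
qed

lemma prod_delta_Conf:
  assumes "\<tau> \<in> Conf a b" "\<rho> \<in> Conf a b"
  shows "(\<Prod>x\<in>{a..b}. (if \<tau> x = \<rho> x then 1 else 0 :: complex)) = (if \<tau> = \<rho> then 1 else 0)"
proof -
  have "(\<Prod>x\<in>{a..b}. (if \<tau> x = \<rho> x then 1 else 0 :: complex)) = (\<Prod>x\<in>{a..b}. (if \<tau> x \<noteq> \<rho> x then 0 else 1 :: complex))"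
    by (intro prod.cong) auto
  also have "\<dots> = (if \<exists>x\<in>{a..b}. \<tau> x \<noteq> \<rho> x then 0 else 1)" by (rule prod_indicator) simp
  also have "(\<exists>x\<in>{a..b}. \<tau> x \<noteq> \<rho> x) = (\<tau> \<noteq> \<rho>)"
    using Conf_eqI[OF assms] by auto
  finally show ?thesis by simp
qed

lemma Tv_Tvi:
  assumes "D \<subseteq> {a..b}"
  shows "mmult a b (TvD a b D) (Tvi a b D) = mid a b"
proof (rule Ops_eqI[OF mmult_Ops mid_Ops])
  fix \<tau> \<rho> assume t: "\<tau> \<in> Conf a b" and r: "\<rho> \<in> Conf a b"
  have "mmult a b (TvD a b D) (Tvi a b D) \<tau> \<rho>
      = (\<Sum>\<sigma>\<in>Conf a b. \<Prod>x\<in>{a..b}. kk D x (\<tau> x) (\<sigma> x) * ww D x (\<sigma> x) (\<rho> x))"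
    using t r assms by (auto simp: mmult_app TvD_prod Tvi_def mk_op_app prod.distrib intro!: sum.cong)
  also have "\<dots> = (\<Prod>x\<in>{a..b}. kk D x (\<tau> x) (-1) * ww D x (-1) (\<rho> x) + kk D x (\<tau> x) 1 * ww D x 1 (\<rho> x))"
    by (rule sum_prod_Conf)
  also have "\<dots> = (\<Prod>x\<in>{a..b}. (if \<tau> x = \<rho> x then 1 else 0))"
    using t r by (intro prod.cong refl kk_ww_local) (auto dest: Conf_val)
  also have "\<dots> = mid a b \<tau> \<rho>" using t r by (simp add: prod_delta_Conf mid_app)
  finally show "mmult a b (TvD a b D) (Tvi a b D) \<tau> \<rho> = mid a b \<tau> \<rho>" .
qed

lemma Tvi_Tv:
  assumes "D \<subseteq> {a..b}"
  shows "mmult a b (Tvi a b D) (TvD a b D) = mid a b"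
proof (rule Ops_eqI[OF mmult_Ops mid_Ops])
  fix \<tau> \<rho> assume t: "\<tau> \<in> Conf a b" and r: "\<rho> \<in> Conf a b"
  have "mmult a b (Tvi a b D) (TvD a b D) \<tau> \<rho>
      = (\<Sum>\<sigma>\<in>Conf a b. \<Prod>x\<in>{a..b}. ww D x (\<tau> x) (\<sigma> x) * kk D x (\<sigma> x) (\<rho> x))"
    using t r assms by (auto simp: mmult_app TvD_prod Tvi_def mk_op_app prod.distrib intro!: sum.cong)
  also have "\<dots> = (\<Prod>x\<in>{a..b}. ww D x (\<tau> x) (-1) * kk D x (-1) (\<rho> x) + ww D x (\<tau> x) 1 * kk D x 1 (\<rho> x))"
    by (rule sum_prod_Conf)
  also have "\<dots> = (\<Prod>x\<in>{a..b}. (if \<tau> x = \<rho> x then 1 else 0))"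
    using t r by (intro prod.cong refl ww_kk_local) (auto dest: Conf_val)
  also have "\<dots> = mid a b \<tau> \<rho>" using t r by (simp add: prod_delta_Conf mid_app)
  finally show "mmult a b (Tvi a b D) (TvD a b D) \<tau> \<rho> = mid a b \<tau> \<rho>" .
qed

definition TT :: "int \<Rightarrow> int \<Rightarrow> int set \<Rightarrow> op" where
  "TT a b D = mmult a b (mmult a b (Th_half a b) (TvD a b D)) (Th_half a b)"

definition TTi :: "int \<Rightarrow> int \<Rightarrow> int set \<Rightarrow> op" where
  "TTi a b D = mmult a b (mmult a b (Thi a b) (Tvi a b D)) (Thi a b)"

lemma Tmat_TT: "Tmat a b = TT a b {a, b}"
  unfolding Tmat_def TT_def Tv_TvD ..

lemma Tslit_TT: "Tslit a b = TT a b {a, 0, b}"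
  unfolding Tslit_def TT_def Tv_slit_TvD ..

lemma TT_Ops: "TT a b D \<in> Ops a b" unfolding TT_def by (rule mmult_Ops)
lemma TTi_Ops: "TTi a b D \<in> Ops a b" unfolding TTi_def by (rule mmult_Ops)

lemma TT_TTi:
  assumes "D \<subseteq> {a..b}"
  shows "mmult a b (TT a b D) (TTi a b D) = mid a b"
proof -
  let ?H = "Th_half a b" and ?Hi = "Thi a b" and ?V = "TvD a b D" and ?Vi = "Tvi a b D"
  let ?m = "mmult a b"
  have "?m (TT a b D) (TTi a b D) = ?m ?H (?m ?V (?m (?m ?H ?Hi) (?m ?Vi ?Hi)))"
    unfolding TT_def TTi_def by (simp add: mmult_assoc)
  also have "\<dots> = ?m ?H (?m (?m ?V ?Vi) ?Hi)" by (simp add: Th_Thi mid_left mmult_Ops mmult_assoc)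
  also have "\<dots> = mid a b" using assms by (simp add: Tv_Tvi mid_left[OF Thi_Ops] Th_Thi)
  finally show ?thesis .
qed

lemma TTi_TT:
  assumes "D \<subseteq> {a..b}"
  shows "mmult a b (TTi a b D) (TT a b D) = mid a b"
proof -
  let ?H = "Th_half a b" and ?Hi = "Thi a b" and ?V = "TvD a b D" and ?Vi = "Tvi a b D"
  let ?m = "mmult a b"
  have "?m (TTi a b D) (TT a b D) = ?m ?Hi (?m ?Vi (?m (?m ?Hi ?H) (?m ?V ?H)))"
    unfolding TT_def TTi_def by (simp add: mmult_assoc)
  also have "\<dots> = ?m ?Hi (?m (?m ?Vi ?V) ?H)" by (simp add: Thi_Th mid_left mmult_Ops mmult_assoc)
  also have "\<dots> = mid a b" using assms by (simp add: Tvi_Tv mid_left[OF Th_Ops] Thi_Th)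
  finally show ?thesis .
qed

lemma minv_TT: "D \<subseteq> {a..b} \<Longrightarrow> minv a b (TT a b D) = TTi a b D"
  by (rule minv_eq[OF TTi_Ops TT_TTi TTi_TT])

lemma TT_app:
  assumes "\<tau> \<in> Conf a b" "\<rho> \<in> Conf a b"
  shows "TT a b D \<tau> \<rho> = complex_of_real (Gf a b \<tau> * exp (beta * Sf a b \<tau> \<rho>) * Gf a b \<rho>) * (if dl D \<tau> \<rho> then 1 else 0)"
  using assms by (simp add: TT_def Th_Gf diag_left diag_right TvD_def mk_op_app)


definition s2 :: complex where "s2 = complex_of_real (sqrt 2)"
definition Qb :: complex where "Qb = complex_of_real (exp beta)"
definition ex :: "int \<Rightarrow> complex" where "ex n = complex_of_real (exp (beta * of_int n))"

definition cBL :: complex where "cBL = - (1 + \<i>) / s2"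
definition cTL :: complex where "cTL = (1 - \<i>) / s2"
definition cBR :: complex where "cBR = (-1 + \<i>) / s2"
definition cTR :: complex where "cTR = (1 + \<i>) / s2"

definition cfv :: "int \<Rightarrow> int \<Rightarrow> complex" where "cfv s t = (- of_int s + \<i> * of_int t) / s2"
definition cfsv :: "int \<Rightarrow> int \<Rightarrow> complex" where "cfsv s t = (- \<i> * of_int s + of_int t) / s2"

lemma s2_sq: "s2 * s2 = 2"
  unfolding s2_def by (simp flip: of_real_mult)
lemma s2_sq': "s2 * (s2 * z) = 2 * z"
  by (simp add: mult.assoc[symmetric] s2_sq)
lemma s2_nz: "s2 \<noteq> 0" unfolding s2_def by simp
lemma Qb_nz: "Qb \<noteq> 0" unfolding Qb_def by simp

lemma exp_one_rel: "exp beta * exp (- beta) = 1"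
  by (simp add: exp_minus)

lemma ex_real_vals:
  "exp (- beta) = exp beta * (sqrt 2 - 1)"
  "exp (beta * 3) = exp beta * (sqrt 2 + 1)"
  "exp (- (beta * 3)) = exp beta * (3 - 2 * sqrt 2)"
proof -
  have a: "exp (- beta) = exp beta * (exp (- beta) * exp (- beta))"
    using exp_one_rel by (metis mult.assoc mult_1)
  show "exp (- beta) = exp beta * (sqrt 2 - 1)" by (subst a) (simp only: exp_beta_inv)
  have b: "beta * 3 = beta + (beta + beta)" by simp
  show "exp (beta * 3) = exp beta * (sqrt 2 + 1)"
    unfolding b exp_add exp_beta_sq ..
  have c: "- (beta * 3) = - beta + (- beta + - beta)" by simp
  have sq: "(sqrt 2 - 1) * (sqrt 2 - 1) = 3 - 2 * sqrt 2" by (simp add: algebra_simps)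
  have "exp (- (beta * 3)) = exp (- beta) * (exp (- beta) * exp (- beta))"
    unfolding c exp_add ..
  also have "\<dots> = exp beta * ((sqrt 2 - 1) * (sqrt 2 - 1))"
    by (subst (1) a) (simp only: exp_beta_inv mult.assoc)
  finally show "exp (- (beta * 3)) = exp beta * (3 - 2 * sqrt 2)" by (simp only: sq)
qed

lemma ex_vals: "ex 1 = Qb" "ex (-1) = Qb * (s2 - 1)" "ex 3 = Qb * (s2 + 1)" "ex (-3) = Qb * (3 - 2 * s2)"
  unfolding ex_def Qb_def s2_def
  by (simp_all add: ex_real_vals)



lemma cBL': "cBL = (-(1 + \<i>)) / s2" by (simp add: cBL_def)

lemma coefs: "(cTL - cBR) / (cTL - cBL) = 1 - \<i>" "(cBR - cBL) / (cTL - cBL) = \<i>"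
  "(cTL - cTR) / (cTL - cBL) = - \<i>" "(cTR - cBL) / (cTL - cBL) = 1 + \<i>"
  unfolding cBL_def cTL_def cBR_def cTR_def using s2_nz
  by (simp_all add: divide_simps)

definition gg :: "complex \<Rightarrow> int \<Rightarrow> int \<Rightarrow> complex" where
  "gg u s t = (- of_int s + \<i> * of_int t) * s2 + u * (- \<i> * of_int s + of_int t)"

lemma pm1: "(t::int) \<in> {-1, 1} \<Longrightarrow> t = -1 \<or> t = 1" by auto

lemma gg_vals: "gg u 1 1 = (-1 + \<i>) * s2 + u * (1 - \<i>)" 
  "gg u 1 (-1) = (-1 - \<i>) * s2 + u * (-1 - \<i>)"
  "gg u (-1) 1 = (1 + \<i>) * s2 + u * (1 + \<i>)"
  "gg u (-1) (-1) = (1 - \<i>) * s2 + u * (-1 + \<i>)"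
  by (simp_all add: gg_def algebra_simps)

lemma loc_R1:
  assumes "r1 \<in> {-1,1}" "r2 \<in> {-1,1}" "r3 \<in> {-1,1}" "t2 \<in> {-1,1}" "t3 \<in> {-1,1}"
  shows "(1 - \<i>) * ex (- r2 * r3 - 2 * r2 * t2) * gg (-(1 + \<i>)) r2 r3
       + \<i> * ex (- t2 * t3 - 2 * r2 * t2) * gg (1 - \<i>) (- t2) t3
       - ex (- r1 * r2) * gg (-1 + \<i>) r1 r2 = 0"
  using pm1[OF assms(1)] pm1[OF assms(2)] pm1[OF assms(3)] pm1[OF assms(4)] pm1[OF assms(5)]
  apply (elim disjE)
  apply (simp_all add: ex_vals gg_vals)
  apply (simp_all add: algebra_simps s2_sq s2_sq')
  done

lemma loc_R2:
  assumes "t1 \<in> {-1,1}" "r2 \<in> {-1,1}" "r3 \<in> {-1,1}" "t2 \<in> {-1,1}" "t3 \<in> {-1,1}"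
  shows "(- \<i>) * ex (- r2 * r3 - 2 * r2 * t2) * gg (-(1 + \<i>)) r2 r3
       + (1 + \<i>) * ex (- t2 * t3 - 2 * r2 * t2) * gg (1 - \<i>) (- t2) t3
       - ex (- t1 * t2) * gg (1 + \<i>) (- t1) t2 = 0"
  using pm1[OF assms(1)] pm1[OF assms(2)] pm1[OF assms(3)] pm1[OF assms(4)] pm1[OF assms(5)]
  apply (elim disjE)
  apply (simp_all add: ex_vals gg_vals)
  apply (simp_all add: algebra_simps s2_sq s2_sq')
  done

lemma loc_Ba:
  assumes "r0 \<in> {-1,1}" "r1 \<in> {-1,1}" "t1 \<in> {-1,1}"
  shows "((1 - \<i>) - \<i> * s2) * ex (- r0 * r1) * gg (-(1 + \<i>)) r0 r1
       + ((1 + \<i>) + \<i> * s2) * ex (r0 * t1) * gg (1 - \<i>) r0 t1 = 0"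
  using pm1[OF assms(1)] pm1[OF assms(2)] pm1[OF assms(3)]
  apply (elim disjE)
  apply (simp_all add: ex_vals gg_vals)
  apply (simp_all add: algebra_simps s2_sq s2_sq')
  done

lemma loc_Bb:
  assumes "r0 \<in> {-1,1}" "r1 \<in> {-1,1}" "t0 \<in> {-1,1}"
  shows "((1 + \<i>) + \<i> * s2) * ex (- r0 * r1) * gg (-1 + \<i>) r0 r1
       + ((1 - \<i>) - \<i> * s2) * ex (- t0 * r1) * gg (1 + \<i>) (- t0) r1 = 0"
  using pm1[OF assms(1)] pm1[OF assms(2)] pm1[OF assms(3)]
  apply (elim disjE)
  apply (simp_all add: ex_vals gg_vals)
  apply (simp_all add: algebra_simps s2_sq s2_sq')
  done


definition pop :: "int \<Rightarrow> int \<Rightarrow> ((int \<Rightarrow> int) \<Rightarrow> complex) \<Rightarrow> int \<Rightarrow> op" where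
  "pop a b f k = mk_op a b (\<lambda>\<tau> \<rho>. if \<tau> = vsig k \<rho> then f \<rho> else 0)"

lemma psi_pop: "psi a b k = pop a b (\<lambda>\<rho>. cfv (\<rho> k) (\<rho> (k + 1))) k"
  unfolding psi_def pop_def cfv_def s2_def ..

lemma psis_pop: "psis a b k = pop a b (\<lambda>\<rho>. cfsv (\<rho> k) (\<rho> (k + 1))) k"
  unfolding psis_def pop_def cfsv_def s2_def ..

lemma pop_Ops: "pop a b f k \<in> Ops a b" unfolding pop_def by (rule mk_op_Ops)
lemma psi_Ops: "psi a b k \<in> Ops a b" unfolding psi_def by (rule mk_op_Ops)
lemma psis_Ops: "psis a b k \<in> Ops a b" unfolding psis_def by (rule mk_op_Ops)

lemma mult_pop_right:
  assumes "\<tau> \<in> Conf a b" "\<rho> \<in> Conf a b"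
  shows "mmult a b M (pop a b f k) \<tau> \<rho> = M \<tau> (vsig k \<rho>) * f \<rho>"
proof -
  have "mmult a b M (pop a b f k) \<tau> \<rho> = (\<Sum>\<sigma>\<in>Conf a b. if \<sigma> = vsig k \<rho> then M \<tau> \<sigma> * f \<rho> else 0)"
    using assms by (auto simp: mmult_app pop_def mk_op_app intro!: sum.cong)
  also have "\<dots> = M \<tau> (vsig k \<rho>) * f \<rho>" using vsig_Conf[OF assms(2)] by (simp add: finite_Conf)
  finally show ?thesis .
qed

lemma mult_pop_left:
  assumes "\<tau> \<in> Conf a b" "\<rho> \<in> Conf a b"
  shows "mmult a b (pop a b f k) M \<tau> \<rho> = f (vsig k \<tau>) * M (vsig k \<tau>) \<rho>"
proof -
  have "mmult a b (pop a b f k) M \<tau> \<rho> = (\<Sum>\<sigma>\<in>Conf a b. if \<sigma> = vsig k \<tau> then f \<sigma> * M \<sigma> \<rho> else 0)"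
    using assms by (auto simp: mmult_app pop_def mk_op_app intro!: sum.cong)
  also have "\<dots> = f (vsig k \<tau>) * M (vsig k \<tau>) \<rho>" using vsig_Conf[OF assms(1)] by (simp add: finite_Conf)
  finally show ?thesis .
qed

lemma sum_change_one:
  fixes f g :: "'a \<Rightarrow> 'b::ab_group_add"
  assumes "finite A" "k \<in> A" "\<And>x. x \<in> A \<Longrightarrow> x \<noteq> k \<Longrightarrow> f x = g x"
  shows "sum f A = sum g A + (f k - g k)"
proof -
  have "sum f A = f k + sum f (A - {k})" using assms by (simp add: sum.remove)
  also have "sum f (A - {k}) = sum g (A - {k})" using assms by (intro sum.cong) auto
  also have "sum g A = g k + sum g (A - {k})" using assms by (simp add: sum.remove)
  ultimately show ?thesis by (simp add: algebra_simps)
qed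

lemma Gf_vsig:
  assumes "a \<le> k" "k < b"
  shows "Gf a b (vsig k \<rho>) = Gf a b \<rho> * exp (beta * of_int (- (\<rho> k * \<rho> (k + 1))))"
proof -
  have "(\<Sum>x\<in>{a..<b}. real_of_int (vsig k \<rho> x * vsig k \<rho> (x + 1)))
      = (\<Sum>x\<in>{a..<b}. real_of_int (\<rho> x * \<rho> (x + 1))) + (real_of_int (vsig k \<rho> k * vsig k \<rho> (k + 1)) - real_of_int (\<rho> k * \<rho> (k + 1)))"
    using assms by (intro sum_change_one) (auto simp: vsig_app)
  also have "real_of_int (vsig k \<rho> k * vsig k \<rho> (k + 1)) = - real_of_int (\<rho> k * \<rho> (k + 1))"
    by (simp add: vsig_app)
  finally have "(\<Sum>x\<in>{a..<b}. real_of_int (vsig k \<rho> x * vsig k \<rho> (x + 1)))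
      = (\<Sum>x\<in>{a..<b}. real_of_int (\<rho> x * \<rho> (x + 1))) - 2 * real_of_int (\<rho> k * \<rho> (k + 1))" by simp
  hence "beta / 2 * (\<Sum>x\<in>{a..<b}. real_of_int (vsig k \<rho> x * vsig k \<rho> (x + 1)))
     = beta / 2 * (\<Sum>x\<in>{a..<b}. real_of_int (\<rho> x * \<rho> (x + 1))) + beta * of_int (- (\<rho> k * \<rho> (k + 1)))"
    by (simp only: ) (simp add: algebra_simps)
  thus ?thesis unfolding Gf_def by (simp only: exp_add)
qed

lemma vsig_step: "d \<noteq> x \<Longrightarrow> vsig x \<rho> d = vsig (x - 1) \<rho> d"
  unfolding vsig_def by auto

lemma vsig_at: "vsig x \<rho> x = - \<rho> x" "vsig (x - 1) \<rho> x = \<rho> x" "vsig x \<rho> (x + 1) = \<rho> (x + 1)"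
  unfolding vsig_def by auto

lemma Sf_step:
  assumes "a \<le> x" "x \<le> b"
  shows "Sf a b \<tau> (vsig x \<rho>) = Sf a b \<tau> (vsig (x - 1) \<rho>) + of_int (- 2 * \<rho> x * \<tau> x)"
proof -
  have "Sf a b \<tau> (vsig x \<rho>) = Sf a b \<tau> (vsig (x - 1) \<rho>) + (real_of_int (vsig x \<rho> x * \<tau> x) - real_of_int (vsig (x - 1) \<rho> x * \<tau> x))"
    unfolding Sf_def using assms by (intro sum_change_one) (simp_all add: vsig_step)
  thus ?thesis by (simp add: vsig_at)
qed

lemma Sf_swap: "Sf a b (vsig k \<tau>) \<rho> = Sf a b \<tau> (vsig k \<rho>)"
  unfolding Sf_def by (intro sum.cong) (auto simp: vsig_app)

lemma dl_swap: "dl D (vsig k \<tau>) \<rho> = dl D \<tau> (vsig k \<rho>)"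
  unfolding dl_def by (auto simp: vsig_app)

lemma dl_step: "x \<notin> D \<Longrightarrow> dl D \<tau> (vsig x \<rho>) = dl D \<tau> (vsig (x - 1) \<rho>)"
  unfolding dl_def by (metis vsig_step)

section \<open>Entries of the transfer matrices around spin flips\<close>

definition EE :: "int \<Rightarrow> int \<Rightarrow> int set \<Rightarrow> (int \<Rightarrow> int) \<Rightarrow> (int \<Rightarrow> int) \<Rightarrow> int \<Rightarrow> complex" where
  "EE a b D \<tau> \<rho> k = complex_of_real (Gf a b \<tau> * Gf a b \<rho> * exp (beta * Sf a b \<tau> (vsig k \<rho>))) * (if dl D \<tau> (vsig k \<rho>) then 1 else 0)"

lemma ex_add: "ex m * ex n = ex (m + n)"
  unfolding ex_def by (simp add: exp_add[symmetric] algebra_simps flip: of_real_mult)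

lemma TT_vsig_right:
  assumes "\<tau> \<in> Conf a b" "\<rho> \<in> Conf a b" "a \<le> k" "k < b"
  shows "TT a b D \<tau> (vsig k \<rho>) = EE a b D \<tau> \<rho> k * ex (- (\<rho> k * \<rho> (k + 1)))"
  using assms by (simp add: TT_app vsig_Conf Gf_vsig EE_def ex_def mult_ac)

lemma TT_vsig_left:
  assumes "\<tau> \<in> Conf a b" "\<rho> \<in> Conf a b" "a \<le> k" "k < b"
  shows "TT a b D (vsig k \<tau>) \<rho> = EE a b D \<tau> \<rho> k * ex (- (\<tau> k * \<tau> (k + 1)))"
  using assms by (simp add: TT_app vsig_Conf Gf_vsig EE_def ex_def mult_ac Sf_swap dl_swap)

lemma EE_step:
  assumes "a \<le> x" "x \<le> b" "x \<notin> D"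
  shows "EE a b D \<tau> \<rho> x = EE a b D \<tau> \<rho> (x - 1) * ex (- 2 * \<rho> x * \<tau> x)"
proof -
  have "exp (beta * Sf a b \<tau> (vsig x \<rho>)) = exp (beta * Sf a b \<tau> (vsig (x - 1) \<rho>)) * exp (beta * of_int (- 2 * \<rho> x * \<tau> x))"
    using assms by (simp only: Sf_step distrib_left exp_add)
  thus ?thesis using assms by (simp add: EE_def dl_step ex_def mult_ac flip: of_real_mult)
qed


lemma gform: "cfv s t + (u / s2) * cfsv s t = gg u s t / 2"
  unfolding cfv_def cfsv_def gg_def using s2_nz
  by (simp add: divide_simps s2_sq) (simp add: algebra_simps s2_sq s2_sq')

lemma coefs2: "(cTL - \<i>) / (cTL - cBL) = ((1 - \<i>) - \<i> * s2) / 2"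
  "(\<i> - cBL) / (cTL - cBL) = ((1 + \<i>) + \<i> * s2) / 2"
  "(cTR - - \<i>) / (cTR - cBR) = ((1 + \<i>) + \<i> * s2) / 2"
  "(- \<i> - cBR) / (cTR - cBR) = ((1 - \<i>) - \<i> * s2) / 2"
  unfolding cBL_def cTL_def cBR_def cTR_def using s2_nz
  by (simp_all add: divide_simps)

definition LCL :: "complex \<Rightarrow> (int \<Rightarrow> op) \<Rightarrow> (int \<Rightarrow> op) \<Rightarrow> (int \<Rightarrow> op) \<Rightarrow> (int \<Rightarrow> op) \<Rightarrow> int \<Rightarrow> (complex \<times> op) list" where
  "LCL c A As B Bs k = [((cTL - c) / (cTL - cBL), A k), ((cTL - c) / (cTL - cBL) * cBL, As k),
                        ((c - cBL) / (cTL - cBL), B k), ((c - cBL) / (cTL - cBL) * cTL, Bs k)]"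

definition LCR :: "complex \<Rightarrow> (int \<Rightarrow> op) \<Rightarrow> (int \<Rightarrow> op) \<Rightarrow> (int \<Rightarrow> op) \<Rightarrow> (int \<Rightarrow> op) \<Rightarrow> int \<Rightarrow> (complex \<times> op) list" where
  "LCR c A As B Bs k = [((cTR - c) / (cTR - cBR), A k), ((cTR - c) / (cTR - cBR) * cBR, As k),
                        ((c - cBR) / (cTR - cBR), B k), ((c - cBR) / (cTR - cBR) * cTR, Bs k)]"

definition relR1 where "relR1 A As B Bs x = LCL cBR A As B Bs x @ [(-1, A (x - 1)), (- cBR, As (x - 1))]"
definition relR2 where "relR2 A As B Bs x = LCL cTR A As B Bs x @ [(-1, B (x - 1)), (- cTR, Bs (x - 1))]"
definition relBa where "relBa A As B Bs k = LCL \<i> A As B Bs k"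
definition relBb where "relBb A As B Bs k = LCR (- \<i>) A As B Bs k"

lemma evl_LCL: "evl (LCL c A As B Bs k) \<tau> \<rho> = (cTL - c) / (cTL - cBL) * (A k \<tau> \<rho> + cBL * As k \<tau> \<rho>) + (c - cBL) / (cTL - cBL) * (B k \<tau> \<rho> + cTL * Bs k \<tau> \<rho>)"
  by (simp add: evl_def LCL_def algebra_simps)

lemma evl_LCR: "evl (LCR c A As B Bs k) \<tau> \<rho> = (cTR - c) / (cTR - cBR) * (A k \<tau> \<rho> + cBR * As k \<tau> \<rho>) + (c - cBR) / (cTR - cBR) * (B k \<tau> \<rho> + cTR * Bs k \<tau> \<rho>)"
  by (simp add: evl_def LCR_def algebra_simps)

lemma evl_append: "evl (L @ L') \<tau> \<rho> = evl L \<tau> \<rho> + evl L' \<tau> \<rho>"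
  by (simp add: evl_def)

lemma evl_relR1: "evl (relR1 A As B Bs x) \<tau> \<rho> = (1 - \<i>) * (A x \<tau> \<rho> + cBL * As x \<tau> \<rho>) + \<i> * (B x \<tau> \<rho> + cTL * Bs x \<tau> \<rho>) - (A (x - 1) \<tau> \<rho> + cBR * As (x - 1) \<tau> \<rho>)"
  by (simp add: relR1_def evl_append evl_LCL coefs) (simp add: evl_def algebra_simps)

lemma evl_relR2: "evl (relR2 A As B Bs x) \<tau> \<rho> = (- \<i>) * (A x \<tau> \<rho> + cBL * As x \<tau> \<rho>) + (1 + \<i>) * (B x \<tau> \<rho> + cTL * Bs x \<tau> \<rho>) - (B (x - 1) \<tau> \<rho> + cTR * Bs (x - 1) \<tau> \<rho>)"
  by (simp add: relR2_def evl_append evl_LCL coefs) (simp add: evl_def algebra_simps)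

lemma evl_relBa: "evl (relBa A As B Bs k) \<tau> \<rho> = ((1 - \<i>) - \<i> * s2) / 2 * (A k \<tau> \<rho> + cBL * As k \<tau> \<rho>) + ((1 + \<i>) + \<i> * s2) / 2 * (B k \<tau> \<rho> + cTL * Bs k \<tau> \<rho>)"
  by (simp only: relBa_def evl_LCL coefs2)

lemma evl_relBb: "evl (relBb A As B Bs k) \<tau> \<rho> = ((1 + \<i>) + \<i> * s2) / 2 * (A k \<tau> \<rho> + cBR * As k \<tau> \<rho>) + ((1 - \<i>) - \<i> * s2) / 2 * (B k \<tau> \<rho> + cTR * Bs k \<tau> \<rho>)"
  by (simp only: relBb_def evl_LCR coefs2)

lemma gA:
  assumes "\<tau> \<in> Conf a b" "\<rho> \<in> Conf a b"
  shows "mmult a b M (psi a b k) \<tau> \<rho> + (u / s2) * mmult a b M (psis a b k) \<tau> \<rho> = M \<tau> (vsig k \<rho>) * gg u (\<rho> k) (\<rho> (k + 1)) / 2"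
proof -
  have "mmult a b M (psi a b k) \<tau> \<rho> + (u / s2) * mmult a b M (psis a b k) \<tau> \<rho>
     = M \<tau> (vsig k \<rho>) * (cfv (\<rho> k) (\<rho> (k + 1)) + (u / s2) * cfsv (\<rho> k) (\<rho> (k + 1)))"
    using assms by (simp add: psi_pop psis_pop mult_pop_right algebra_simps)
  thus ?thesis by (simp only: gform times_divide_eq_right)
qed

lemma gB:
  assumes "\<tau> \<in> Conf a b" "\<rho> \<in> Conf a b"
  shows "mmult a b (psi a b k) M \<tau> \<rho> + (u / s2) * mmult a b (psis a b k) M \<tau> \<rho> = M (vsig k \<tau>) \<rho> * gg u (- \<tau> k) (\<tau> (k + 1)) / 2"
proof -
  have "mmult a b (psi a b k) M \<tau> \<rho> + (u / s2) * mmult a b (psis a b k) M \<tau> \<rho>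
     = M (vsig k \<tau>) \<rho> * (cfv (- \<tau> k) (\<tau> (k + 1)) + (u / s2) * cfsv (- \<tau> k) (\<tau> (k + 1)))"
    using assms by (simp add: psi_pop psis_pop mult_pop_left algebra_simps vsig_app)
  thus ?thesis by (simp only: gform times_divide_eq_right)
qed

abbreviation mA where "mA a b M \<equiv> (\<lambda>k. mmult a b M (psi a b k))"
abbreviation mAs where "mAs a b M \<equiv> (\<lambda>k. mmult a b M (psis a b k))"
abbreviation mB where "mB a b M \<equiv> (\<lambda>k. mmult a b (psi a b k) M)"
abbreviation mBs where "mBs a b M \<equiv> (\<lambda>k. mmult a b (psis a b k) M)"

lemma Conf_pm: "\<rho> \<in> Conf a b \<Longrightarrow> a \<le> x \<Longrightarrow> x \<le> b \<Longrightarrow> \<rho> x \<in> {-1, 1}"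
  using Conf_val by blast

lemma cBL_u: "cBL = (- (1 + \<i>)) / s2" by (simp add: cBL_def)
lemma cTL_u: "cTL = (1 - \<i>) / s2" by (simp add: cTL_def)
lemma cBR_u: "cBR = (-1 + \<i>) / s2" by (simp add: cBR_def)
lemma cTR_u: "cTR = (1 + \<i>) / s2" by (simp add: cTR_def)

lemma mR1:
  assumes "a < x" "x < b" "x \<notin> D"
  shows "evl (relR1 (mA a b (TT a b D)) (mAs a b (TT a b D)) (mB a b (TT a b D)) (mBs a b (TT a b D)) x) = (\<lambda>_ _. 0)"
proof (intro ext)
  fix \<tau> \<rho>
  let ?M = "TT a b D"
  show "evl (relR1 (mA a b ?M) (mAs a b ?M) (mB a b ?M) (mBs a b ?M) x) \<tau> \<rho> = 0"
  proof (cases "\<tau> \<in> Conf a b \<and> \<rho> \<in> Conf a b")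
    case False thus ?thesis by (simp add: evl_relR1 mmult_out)
  next
    case True
    hence t: "\<tau> \<in> Conf a b" and r: "\<rho> \<in> Conf a b" by auto
    let ?E = "EE a b D \<tau> \<rho> (x - 1)"
    have xm: "x - 1 + 1 = x" by simp
    have ax: "a \<le> x" "x \<le> b" "a \<le> x - 1" "x - 1 < b" "x < b" using assms by auto
    have ee: "EE a b D \<tau> \<rho> x = ?E * ex (- 2 * \<rho> x * \<tau> x)"
      using assms by (intro EE_step) auto
    have e1: "mA a b ?M x \<tau> \<rho> + cBL * mAs a b ?M x \<tau> \<rho> = ?E * ex (- \<rho> x * \<rho> (x + 1) - 2 * \<rho> x * \<tau> x) * gg (- (1 + \<i>)) (\<rho> x) (\<rho> (x + 1)) / 2"
    proof -
      have "ex (- 2 * \<rho> x * \<tau> x) * ex (- (\<rho> x * \<rho> (x + 1))) = ex (- \<rho> x * \<rho> (x + 1) - 2 * \<rho> x * \<tau> x)"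
        unfolding ex_add by (rule arg_cong[where f=ex]) simp
      thus ?thesis unfolding cBL_u gA[OF t r] TT_vsig_right[OF t r ax(1,5)] ee by (simp add: mult_ac)
    qed
    have e2: "mB a b ?M x \<tau> \<rho> + cTL * mBs a b ?M x \<tau> \<rho> = ?E * ex (- \<tau> x * \<tau> (x + 1) - 2 * \<rho> x * \<tau> x) * gg (1 - \<i>) (- \<tau> x) (\<tau> (x + 1)) / 2"
    proof -
      have "ex (- 2 * \<rho> x * \<tau> x) * ex (- (\<tau> x * \<tau> (x + 1))) = ex (- \<tau> x * \<tau> (x + 1) - 2 * \<rho> x * \<tau> x)"
        unfolding ex_add by (rule arg_cong[where f=ex]) simp
      thus ?thesis unfolding cTL_u gB[OF t r] TT_vsig_left[OF t r ax(1,5)] ee by (simp add: mult_ac)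
    qed
    have e3: "mA a b ?M (x - 1) \<tau> \<rho> + cBR * mAs a b ?M (x - 1) \<tau> \<rho> = ?E * ex (- \<rho> (x - 1) * \<rho> x) * gg (-1 + \<i>) (\<rho> (x - 1)) (\<rho> x) / 2"
      unfolding cBR_u gA[OF t r] TT_vsig_right[OF t r ax(3,4)] xm by simp
    have l: "(1 - \<i>) * ex (- \<rho> x * \<rho> (x + 1) - 2 * \<rho> x * \<tau> x) * gg (-(1 + \<i>)) (\<rho> x) (\<rho> (x + 1))
       + \<i> * ex (- \<tau> x * \<tau> (x + 1) - 2 * \<rho> x * \<tau> x) * gg (1 - \<i>) (- \<tau> x) (\<tau> (x + 1))
       - ex (- \<rho> (x - 1) * \<rho> x) * gg (-1 + \<i>) (\<rho> (x - 1)) (\<rho> x) = 0"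
      using assms by (intro loc_R1 Conf_pm[OF r] Conf_pm[OF t]) auto
    have "evl (relR1 (mA a b ?M) (mAs a b ?M) (mB a b ?M) (mBs a b ?M) x) \<tau> \<rho>
      = ?E / 2 * ((1 - \<i>) * ex (- \<rho> x * \<rho> (x + 1) - 2 * \<rho> x * \<tau> x) * gg (-(1 + \<i>)) (\<rho> x) (\<rho> (x + 1))
       + \<i> * ex (- \<tau> x * \<tau> (x + 1) - 2 * \<rho> x * \<tau> x) * gg (1 - \<i>) (- \<tau> x) (\<tau> (x + 1))
       - ex (- \<rho> (x - 1) * \<rho> x) * gg (-1 + \<i>) (\<rho> (x - 1)) (\<rho> x))"
      unfolding evl_relR1 e1 e2 e3 by (simp add: field_simps)
    thus ?thesis using l by simp
  qed
qed

lemma mR2: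
  assumes "a < x" "x < b" "x \<notin> D"
  shows "evl (relR2 (mA a b (TT a b D)) (mAs a b (TT a b D)) (mB a b (TT a b D)) (mBs a b (TT a b D)) x) = (\<lambda>_ _. 0)"
proof (intro ext)
  fix \<tau> \<rho>
  let ?M = "TT a b D"
  show "evl (relR2 (mA a b ?M) (mAs a b ?M) (mB a b ?M) (mBs a b ?M) x) \<tau> \<rho> = 0"
  proof (cases "\<tau> \<in> Conf a b \<and> \<rho> \<in> Conf a b")
    case False thus ?thesis by (simp add: evl_relR2 mmult_out)
  next
    case True
    hence t: "\<tau> \<in> Conf a b" and r: "\<rho> \<in> Conf a b" by auto
    let ?E = "EE a b D \<tau> \<rho> (x - 1)"
    have xm: "x - 1 + 1 = x" by simp
    have ax: "a \<le> x" "x \<le> b" "a \<le> x - 1" "x - 1 < b" "x < b" using assms by auto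
    have ee: "EE a b D \<tau> \<rho> x = ?E * ex (- 2 * \<rho> x * \<tau> x)"
      using assms by (intro EE_step) auto
    have e1: "mA a b ?M x \<tau> \<rho> + cBL * mAs a b ?M x \<tau> \<rho> = ?E * ex (- \<rho> x * \<rho> (x + 1) - 2 * \<rho> x * \<tau> x) * gg (- (1 + \<i>)) (\<rho> x) (\<rho> (x + 1)) / 2"
    proof -
      have "ex (- 2 * \<rho> x * \<tau> x) * ex (- (\<rho> x * \<rho> (x + 1))) = ex (- \<rho> x * \<rho> (x + 1) - 2 * \<rho> x * \<tau> x)"
        unfolding ex_add by (rule arg_cong[where f=ex]) simp
      thus ?thesis unfolding cBL_u gA[OF t r] TT_vsig_right[OF t r ax(1,5)] ee by (simp add: mult_ac)
    qed
    have e2: "mB a b ?M x \<tau> \<rho> + cTL * mBs a b ?M x \<tau> \<rho> = ?E * ex (- \<tau> x * \<tau> (x + 1) - 2 * \<rho> x * \<tau> x) * gg (1 - \<i>) (- \<tau> x) (\<tau> (x + 1)) / 2"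
    proof -
      have "ex (- 2 * \<rho> x * \<tau> x) * ex (- (\<tau> x * \<tau> (x + 1))) = ex (- \<tau> x * \<tau> (x + 1) - 2 * \<rho> x * \<tau> x)"
        unfolding ex_add by (rule arg_cong[where f=ex]) simp
      thus ?thesis unfolding cTL_u gB[OF t r] TT_vsig_left[OF t r ax(1,5)] ee by (simp add: mult_ac)
    qed
    have e4: "mB a b ?M (x - 1) \<tau> \<rho> + cTR * mBs a b ?M (x - 1) \<tau> \<rho> = ?E * ex (- \<tau> (x - 1) * \<tau> x) * gg (1 + \<i>) (- \<tau> (x - 1)) (\<tau> x) / 2"
      unfolding cTR_u gB[OF t r] TT_vsig_left[OF t r ax(3,4)] xm by simp
    have l: "(- \<i>) * ex (- \<rho> x * \<rho> (x + 1) - 2 * \<rho> x * \<tau> x) * gg (-(1 + \<i>)) (\<rho> x) (\<rho> (x + 1))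
       + (1 + \<i>) * ex (- \<tau> x * \<tau> (x + 1) - 2 * \<rho> x * \<tau> x) * gg (1 - \<i>) (- \<tau> x) (\<tau> (x + 1))
       - ex (- \<tau> (x - 1) * \<tau> x) * gg (1 + \<i>) (- \<tau> (x - 1)) (\<tau> x) = 0"
      using assms by (intro loc_R2 Conf_pm[OF r] Conf_pm[OF t]) auto
    have "evl (relR2 (mA a b ?M) (mAs a b ?M) (mB a b ?M) (mBs a b ?M) x) \<tau> \<rho>
      = ?E / 2 * ((- \<i>) * ex (- \<rho> x * \<rho> (x + 1) - 2 * \<rho> x * \<tau> x) * gg (-(1 + \<i>)) (\<rho> x) (\<rho> (x + 1))
       + (1 + \<i>) * ex (- \<tau> x * \<tau> (x + 1) - 2 * \<rho> x * \<tau> x) * gg (1 - \<i>) (- \<tau> x) (\<tau> (x + 1))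
       - ex (- \<tau> (x - 1) * \<tau> x) * gg (1 + \<i>) (- \<tau> (x - 1)) (\<tau> x))"
      unfolding evl_relR2 e1 e2 e4 by (simp add: field_simps)
    thus ?thesis using l by simp
  qed
qed

lemma EE_zero: "\<not> dl D \<tau> (vsig k \<rho>) \<Longrightarrow> EE a b D \<tau> \<rho> k = 0"
  by (simp add: EE_def)

lemma mBa:
  assumes "a \<le> k" "k < b" "k \<in> D"
  shows "evl (relBa (mA a b (TT a b D)) (mAs a b (TT a b D)) (mB a b (TT a b D)) (mBs a b (TT a b D)) k) = (\<lambda>_ _. 0)"
proof (intro ext)
  fix \<tau> \<rho>
  let ?M = "TT a b D"
  show "evl (relBa (mA a b ?M) (mAs a b ?M) (mB a b ?M) (mBs a b ?M) k) \<tau> \<rho> = 0"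
  proof (cases "\<tau> \<in> Conf a b \<and> \<rho> \<in> Conf a b")
    case False thus ?thesis by (simp add: evl_relBa mmult_out)
  next
    case True
    hence t: "\<tau> \<in> Conf a b" and r: "\<rho> \<in> Conf a b" by auto
    let ?E = "EE a b D \<tau> \<rho> k"
    have e1: "mA a b ?M k \<tau> \<rho> + cBL * mAs a b ?M k \<tau> \<rho> = ?E * ex (- (\<rho> k * \<rho> (k + 1))) * gg (- (1 + \<i>)) (\<rho> k) (\<rho> (k + 1)) / 2"
      unfolding cBL_u gA[OF t r] TT_vsig_right[OF t r assms(1,2)] ..
    have e2: "mB a b ?M k \<tau> \<rho> + cTL * mBs a b ?M k \<tau> \<rho> = ?E * ex (- (\<tau> k * \<tau> (k + 1))) * gg (1 - \<i>) (- \<tau> k) (\<tau> (k + 1)) / 2"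
      unfolding cTL_u gB[OF t r] TT_vsig_left[OF t r assms(1,2)] ..
    have ev: "evl (relBa (mA a b ?M) (mAs a b ?M) (mB a b ?M) (mBs a b ?M) k) \<tau> \<rho>
      = ?E / 4 * (((1 - \<i>) - \<i> * s2) * ex (- (\<rho> k * \<rho> (k + 1))) * gg (- (1 + \<i>)) (\<rho> k) (\<rho> (k + 1))
          + ((1 + \<i>) + \<i> * s2) * ex (- (\<tau> k * \<tau> (k + 1))) * gg (1 - \<i>) (- \<tau> k) (\<tau> (k + 1)))"
      unfolding evl_relBa e1 e2 by (simp add: field_simps)
    show ?thesis
    proof (cases "dl D \<tau> (vsig k \<rho>)")
      case False thus ?thesis using ev EE_zero by simp
    next
      case True
      hence tk: "\<tau> k = - \<rho> k" using assms by (simp add: dl_def vsig_app)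
      have l: "((1 - \<i>) - \<i> * s2) * ex (- \<rho> k * \<rho> (k + 1)) * gg (-(1 + \<i>)) (\<rho> k) (\<rho> (k + 1))
         + ((1 + \<i>) + \<i> * s2) * ex (\<rho> k * \<tau> (k + 1)) * gg (1 - \<i>) (\<rho> k) (\<tau> (k + 1)) = 0"
        using assms by (intro loc_Ba Conf_pm[OF r] Conf_pm[OF t]) auto
      show ?thesis using ev l tk by simp
    qed
  qed
qed

lemma mBb:
  assumes "a \<le> k" "k < b" "k + 1 \<in> D"
  shows "evl (relBb (mA a b (TT a b D)) (mAs a b (TT a b D)) (mB a b (TT a b D)) (mBs a b (TT a b D)) k) = (\<lambda>_ _. 0)"
proof (intro ext)
  fix \<tau> \<rho>
  let ?M = "TT a b D"
  show "evl (relBb (mA a b ?M) (mAs a b ?M) (mB a b ?M) (mBs a b ?M) k) \<tau> \<rho> = 0"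
  proof (cases "\<tau> \<in> Conf a b \<and> \<rho> \<in> Conf a b")
    case False thus ?thesis by (simp add: evl_relBb mmult_out)
  next
    case True
    hence t: "\<tau> \<in> Conf a b" and r: "\<rho> \<in> Conf a b" by auto
    let ?E = "EE a b D \<tau> \<rho> k"
    have e1: "mA a b ?M k \<tau> \<rho> + cBR * mAs a b ?M k \<tau> \<rho> = ?E * ex (- (\<rho> k * \<rho> (k + 1))) * gg (-1 + \<i>) (\<rho> k) (\<rho> (k + 1)) / 2"
      unfolding cBR_u gA[OF t r] TT_vsig_right[OF t r assms(1,2)] ..
    have e2: "mB a b ?M k \<tau> \<rho> + cTR * mBs a b ?M k \<tau> \<rho> = ?E * ex (- (\<tau> k * \<tau> (k + 1))) * gg (1 + \<i>) (- \<tau> k) (\<tau> (k + 1)) / 2"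
      unfolding cTR_u gB[OF t r] TT_vsig_left[OF t r assms(1,2)] ..
    have ev: "evl (relBb (mA a b ?M) (mAs a b ?M) (mB a b ?M) (mBs a b ?M) k) \<tau> \<rho>
      = ?E / 4 * (((1 + \<i>) + \<i> * s2) * ex (- (\<rho> k * \<rho> (k + 1))) * gg (-1 + \<i>) (\<rho> k) (\<rho> (k + 1))
          + ((1 - \<i>) - \<i> * s2) * ex (- (\<tau> k * \<tau> (k + 1))) * gg (1 + \<i>) (- \<tau> k) (\<tau> (k + 1)))"
      unfolding evl_relBb e1 e2 by (simp add: field_simps)
    show ?thesis
    proof (cases "dl D \<tau> (vsig k \<rho>)")
      case False thus ?thesis using ev EE_zero by simp
    next
      case True
      hence tk: "\<tau> (k + 1) = \<rho> (k + 1)" using assms by (simp add: dl_def vsig_app)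
      have l: "((1 + \<i>) + \<i> * s2) * ex (- \<rho> k * \<rho> (k + 1)) * gg (-1 + \<i>) (\<rho> k) (\<rho> (k + 1))
         + ((1 - \<i>) - \<i> * s2) * ex (- \<tau> k * \<rho> (k + 1)) * gg (1 + \<i>) (- \<tau> k) (\<rho> (k + 1)) = 0"
        using assms by (intro loc_Bb Conf_pm[OF r] Conf_pm[OF t]) auto
      show ?thesis using ev l tk by simp
    qed
  qed
qed


definition natR :: "((int \<Rightarrow> op) \<Rightarrow> (int \<Rightarrow> op) \<Rightarrow> (int \<Rightarrow> op) \<Rightarrow> (int \<Rightarrow> op) \<Rightarrow> (complex \<times> op) list) \<Rightarrow> bool" where
  "natR R \<longleftrightarrow> (\<forall>f A As B Bs. map (\<lambda>p. (fst p, f (snd p))) (R A As B Bs) = R (f \<circ> A) (f \<circ> As) (f \<circ> B) (f \<circ> Bs))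
     \<and> (\<forall>A As B Bs. snd ` set (R A As B Bs) \<subseteq> range A \<union> range As \<union> range B \<union> range Bs)"

lemma natR_R1: "natR (\<lambda>A As B Bs. relR1 A As B Bs x)"
  unfolding natR_def relR1_def LCL_def by auto
lemma natR_R2: "natR (\<lambda>A As B Bs. relR2 A As B Bs x)"
  unfolding natR_def relR2_def LCL_def by auto
lemma natR_Ba: "natR (\<lambda>A As B Bs. relBa A As B Bs x)"
  unfolding natR_def relBa_def LCL_def by auto
lemma natR_Bb: "natR (\<lambda>A As B Bs. relBb A As B Bs x)"
  unfolding natR_def relBb_def LCR_def by auto

lemma natR_map: "natR R \<Longrightarrow> map (\<lambda>p. (fst p, f (snd p))) (R A As B Bs) = R (f \<circ> A) (f \<circ> As) (f \<circ> B) (f \<circ> Bs)"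
  unfolding natR_def by blast

lemma natR_Ops:
  assumes "natR R" "\<And>k. A k \<in> Ops a b" "\<And>k. As k \<in> Ops a b" "\<And>k. B k \<in> Ops a b" "\<And>k. Bs k \<in> Ops a b"
  shows "evl (R A As B Bs) \<in> Ops a b"
proof (rule evl_Ops)
  fix p assume "p \<in> set (R A As B Bs)"
  hence "snd p \<in> range A \<union> range As \<union> range B \<union> range Bs" using assms(1) unfolding natR_def by blast
  thus "snd p \<in> Ops a b" using assms by auto
qed

lemma mmult_zero_right: "mmult a b P (\<lambda>_ _. 0) = (\<lambda>_ _. 0)"
  by (simp add: mmult_def mk_op_def)
lemma mmult_zero_left: "mmult a b (\<lambda>_ _. 0) P = (\<lambda>_ _. 0)"
  by (simp add: mmult_def mk_op_def)

lemma base_T: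
  assumes R: "natR R" and D: "D \<subseteq> {a..b}"
  and h: "evl (R (mA a b (TT a b D)) (mAs a b (TT a b D)) (mB a b (TT a b D)) (mBs a b (TT a b D))) = (\<lambda>_ _. 0)"
  shows "evl (R (psi a b) (psis a b) (\<lambda>k. cj a b (TTi a b D) (TT a b D) (psi a b k)) (\<lambda>k. cj a b (TTi a b D) (TT a b D) (psis a b k))) = (\<lambda>_ _. 0)"
proof -
  let ?M = "TT a b D" and ?Mi = "TTi a b D"
  let ?X = "evl (R (psi a b) (psis a b) (\<lambda>k. cj a b ?Mi ?M (psi a b k)) (\<lambda>k. cj a b ?Mi ?M (psis a b k)))"
  have c1: "mmult a b ?M (cj a b ?Mi ?M P) = mmult a b P ?M" if "P \<in> Ops a b" for P
  proof -
    have "mmult a b ?M (cj a b ?Mi ?M P) = mmult a b (mmult a b (mmult a b ?M ?Mi) P) ?M"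
      by (simp add: cj_def mmult_assoc)
    also have "\<dots> = mmult a b P ?M" using D that by (simp add: TT_TTi mid_left)
    finally show ?thesis .
  qed
  have "mmult a b ?M ?X = evl (R (mA a b ?M) (mAs a b ?M) (mB a b ?M) (mBs a b ?M))"
    by (simp add: mmult_evl_left natR_map[OF R] o_def c1 psi_Ops psis_Ops)
  also have "\<dots> = (\<lambda>_ _. 0)" by (rule h)
  finally have m: "mmult a b ?M ?X = (\<lambda>_ _. 0)" .
  have XO: "?X \<in> Ops a b"
    by (rule natR_Ops[OF R]) (simp_all add: psi_Ops psis_Ops cj_def mmult_Ops)
  have "?X = mmult a b (mmult a b ?Mi ?M) ?X" using D XO by (simp add: TTi_TT mid_left)
  also have "\<dots> = mmult a b ?Mi (mmult a b ?M ?X)" by (simp add: mmult_assoc)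
  also have "\<dots> = (\<lambda>_ _. 0)" by (simp add: m mmult_zero_right)
  finally show ?thesis .
qed

lemma base_S:
  assumes R: "natR R" and D: "D \<subseteq> {a..b}"
  and h: "evl (R (mA a b (TT a b D)) (mAs a b (TT a b D)) (mB a b (TT a b D)) (mBs a b (TT a b D))) = (\<lambda>_ _. 0)"
  shows "evl (R (\<lambda>k. cj a b (TT a b D) (TTi a b D) (psi a b k)) (\<lambda>k. cj a b (TT a b D) (TTi a b D) (psis a b k)) (psi a b) (psis a b)) = (\<lambda>_ _. 0)"
proof -
  let ?M = "TT a b D" and ?Mi = "TTi a b D"
  let ?X = "evl (R (\<lambda>k. cj a b ?M ?Mi (psi a b k)) (\<lambda>k. cj a b ?M ?Mi (psis a b k)) (psi a b) (psis a b))"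
  have c1: "mmult a b (cj a b ?M ?Mi P) ?M = mmult a b ?M P" if "P \<in> Ops a b" for P
  proof -
    have "mmult a b (cj a b ?M ?Mi P) ?M = mmult a b (mmult a b ?M P) (mmult a b ?Mi ?M)"
      by (simp add: cj_def mmult_assoc)
    also have "\<dots> = mmult a b ?M P" using D that by (simp add: TTi_TT mid_right mmult_Ops)
    finally show ?thesis .
  qed
  have "mmult a b ?X ?M = evl (R ((\<lambda>X. mmult a b X ?M) \<circ> (\<lambda>k. cj a b ?M ?Mi (psi a b k))) ((\<lambda>X. mmult a b X ?M) \<circ> (\<lambda>k. cj a b ?M ?Mi (psis a b k)))
      ((\<lambda>X. mmult a b X ?M) \<circ> psi a b) ((\<lambda>X. mmult a b X ?M) \<circ> psis a b))"
    unfolding mmult_evl_right by (subst natR_map[OF R]) (rule refl)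
  also have "\<dots> = evl (R (mA a b ?M) (mAs a b ?M) (mB a b ?M) (mBs a b ?M))"
    by (simp add: o_def c1 psi_Ops psis_Ops)
  also have "\<dots> = (\<lambda>_ _. 0)" by (rule h)
  finally have m: "mmult a b ?X ?M = (\<lambda>_ _. 0)" .
  have XO: "?X \<in> Ops a b"
    by (rule natR_Ops[OF R]) (simp_all add: psi_Ops psis_Ops cj_def mmult_Ops)
  have "?X = mmult a b ?X (mmult a b ?M ?Mi)" using D XO by (simp add: TT_TTi mid_right)
  also have "\<dots> = mmult a b (mmult a b ?X ?M) ?Mi" by (simp add: mmult_assoc)
  also have "\<dots> = (\<lambda>_ _. 0)" by (simp add: m mmult_zero_left)
  finally show ?thesis .
qed

abbreviation hp where "hp a b k y \<equiv> hor_psi a b psi k y"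
abbreviation hps where "hps a b k y \<equiv> hor_psi a b psis k y"

lemma cj_mid: "X \<in> Ops a b \<Longrightarrow> cj a b (mid a b) (mid a b) X = X"
  by (simp add: cj_def mid_left mid_right)

lemma cj_comp_T:
  assumes "M \<in> Ops a b" "Mi \<in> Ops a b"
  shows "cj a b (mpow a b Mi (Suc n)) (mpow a b M (Suc n)) X = cj a b (mpow a b Mi n) (mpow a b M n) (cj a b Mi M X)"
proof -
  have e1: "mpow a b Mi (Suc n) = mmult a b (mpow a b Mi n) Mi" by (rule mpow_Suc_right[OF assms(2)])
  have e2: "mpow a b M (Suc n) = mmult a b M (mpow a b M n)" by simp
  show ?thesis unfolding cj_def e1 e2 by (simp only: mmult_assoc)
qed

lemma cj_comp_S:
  assumes "M \<in> Ops a b" "Mi \<in> Ops a b"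
  shows "cj a b (mpow a b M (Suc n)) (mpow a b Mi (Suc n)) X = cj a b (mpow a b M n) (mpow a b Mi n) (cj a b M Mi X)"
proof -
  have e1: "mpow a b M (Suc n) = mmult a b (mpow a b M n) M" by (rule mpow_Suc_right[OF assms(1)])
  have e2: "mpow a b Mi (Suc n) = mmult a b Mi (mpow a b Mi n)" by simp
  show ?thesis unfolding cj_def e1 e2 by (simp only: mmult_assoc)
qed

definition DT where "DT a b = {a, b}"
definition DS where "DS a b = {a, 0, b}"

lemma hor_nonneg: "a \<le> b \<Longrightarrow> 0 \<le> y \<Longrightarrow> hor_psi a b P k y = cj a b (mpow a b (TTi a b (DT a b)) (nat y)) (mpow a b (TT a b (DT a b)) (nat y)) (P a b k)"
  unfolding hor_psi_def cj_def DT_def Tmat_TT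
  by (subst minv_TT) auto

lemma hor_neg:
  assumes "a \<le> 0" "0 \<le> b" "y \<le> 0"
  shows "hor_psi a b P k y = cj a b (mpow a b (TT a b (DS a b)) (nat (- y))) (mpow a b (TTi a b (DS a b)) (nat (- y))) (P a b k)"
proof (cases "y = 0")
  case True thus ?thesis by (simp add: hor_psi_def cj_def)
next
  case False
  have "{a, 0, b} \<subseteq> {a..b}" using assms by auto
  thus ?thesis using False assms unfolding hor_psi_def cj_def DS_def Tslit_TT by (simp add: minv_TT)
qed

lemma row_T:
  assumes R: "natR R" and y: "0 \<le> y"
  and h: "evl (R (mA a b (TT a b (DT a b))) (mAs a b (TT a b (DT a b))) (mB a b (TT a b (DT a b))) (mBs a b (TT a b (DT a b)))) = (\<lambda>_ _. 0)"
  and ab: "a \<le> b"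
  shows "evl (R (\<lambda>k. hp a b k y) (\<lambda>k. hps a b k y) (\<lambda>k. hp a b k (y + 1)) (\<lambda>k. hps a b k (y + 1))) = (\<lambda>_ _. 0)"
proof -
  let ?M = "TT a b (DT a b)" and ?Mi = "TTi a b (DT a b)"
  let ?f = "cj a b (mpow a b ?Mi (nat y)) (mpow a b ?M (nat y))"
  have D: "DT a b \<subseteq> {a..b}" using ab by (auto simp: DT_def)
  have n1: "nat (y + 1) = Suc (nat y)" using y by simp
  have "(\<lambda>k. hp a b k y) = ?f \<circ> psi a b" "(\<lambda>k. hps a b k y) = ?f \<circ> psis a b"
    using y ab by (simp_all add: hor_nonneg o_def)
  moreover have "(\<lambda>k. hp a b k (y + 1)) = ?f \<circ> (\<lambda>k. cj a b ?Mi ?M (psi a b k))"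
    "(\<lambda>k. hps a b k (y + 1)) = ?f \<circ> (\<lambda>k. cj a b ?Mi ?M (psis a b k))"
    using y ab by (simp_all add: hor_nonneg n1 cj_comp_T TT_Ops TTi_Ops o_def del: mpow.simps)
  ultimately show ?thesis
    using cj_rel[OF base_T[OF R D h]] by (simp add: natR_map[OF R, symmetric])
qed

lemma row_S:
  assumes R: "natR R" and y: "y < 0"
  and h: "evl (R (mA a b (TT a b (DS a b))) (mAs a b (TT a b (DS a b))) (mB a b (TT a b (DS a b))) (mBs a b (TT a b (DS a b)))) = (\<lambda>_ _. 0)"
  and ab: "a \<le> 0" "0 \<le> b"
  shows "evl (R (\<lambda>k. hp a b k y) (\<lambda>k. hps a b k y) (\<lambda>k. hp a b k (y + 1)) (\<lambda>k. hps a b k (y + 1))) = (\<lambda>_ _. 0)"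
proof -
  let ?M = "TT a b (DS a b)" and ?Mi = "TTi a b (DS a b)"
  let ?f = "cj a b (mpow a b ?M (nat (- (y + 1)))) (mpow a b ?Mi (nat (- (y + 1))))"
  have D: "DS a b \<subseteq> {a..b}" using ab by (auto simp: DS_def)
  have n1: "nat (- y) = Suc (nat (- (y + 1)))" using y by simp
  have "(\<lambda>k. hp a b k (y + 1)) = ?f \<circ> psi a b" "(\<lambda>k. hps a b k (y + 1)) = ?f \<circ> psis a b"
    using y ab by (simp_all add: hor_neg o_def)
  moreover have "(\<lambda>k. hp a b k y) = ?f \<circ> (\<lambda>k. cj a b ?M ?Mi (psi a b k))"
    "(\<lambda>k. hps a b k y) = ?f \<circ> (\<lambda>k. cj a b ?M ?Mi (psis a b k))"
    using y ab by (simp_all add: hor_neg n1 cj_comp_S TT_Ops TTi_Ops o_def del: mpow.simps)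
  ultimately show ?thesis
    using cj_rel[OF base_S[OF R D h]] by (simp add: natR_map[OF R, symmetric])
qed


section \<open>CliffGen closure\<close>

abbreviation CG where "CG a b \<equiv> CliffGen a b"

lemma CG_add: "A \<in> CG a b \<Longrightarrow> B \<in> CG a b \<Longrightarrow> (\<lambda>\<tau> \<rho>. A \<tau> \<rho> + B \<tau> \<rho>) \<in> CG a b"
proof -
  assume "A \<in> CG a b" "B \<in> CG a b"
  then obtain c d c' d' where A: "A = (\<lambda>\<tau> \<rho>. \<Sum>k\<in>{a..<b}. c k * psi a b k \<tau> \<rho> + d k * psis a b k \<tau> \<rho>)"
    and B: "B = (\<lambda>\<tau> \<rho>. \<Sum>k\<in>{a..<b}. c' k * psi a b k \<tau> \<rho> + d' k * psis a b k \<tau> \<rho>)"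
    unfolding CliffGen_def by blast
  show ?thesis unfolding CliffGen_def
    by (rule CollectI, rule exI[of _ "\<lambda>k. c k + c' k"], rule exI[of _ "\<lambda>k. d k + d' k"])
       (simp add: A B sum.distrib[symmetric] algebra_simps)
qed

lemma CG_scale: "A \<in> CG a b \<Longrightarrow> (\<lambda>\<tau> \<rho>. u * A \<tau> \<rho>) \<in> CG a b"
proof -
  assume "A \<in> CG a b"
  then obtain c d where A: "A = (\<lambda>\<tau> \<rho>. \<Sum>k\<in>{a..<b}. c k * psi a b k \<tau> \<rho> + d k * psis a b k \<tau> \<rho>)"
    unfolding CliffGen_def by blast
  show ?thesis unfolding CliffGen_def
    by (rule CollectI, rule exI[of _ "\<lambda>k. u * c k"], rule exI[of _ "\<lambda>k. u * d k"])
       (simp add: A sum_distrib_left algebra_simps)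
qed

lemma CG_lin: "A \<in> CG a b \<Longrightarrow> B \<in> CG a b \<Longrightarrow> (\<lambda>\<tau> \<rho>. u * A \<tau> \<rho> + v * B \<tau> \<rho>) \<in> CG a b"
  using CG_add[OF CG_scale CG_scale] by blast

lemma CG_zero: "(\<lambda>_ _. 0) \<in> CG a b"
  unfolding CliffGen_def by (rule CollectI, rule exI[of _ "\<lambda>_. 0"], rule exI[of _ "\<lambda>_. 0"]) simp

lemma CG_psi: "a \<le> k \<Longrightarrow> k < b \<Longrightarrow> psi a b k \<in> CG a b"
  unfolding CliffGen_def
proof (rule CollectI, rule exI[of _ "\<lambda>j. if j = k then 1 else 0"], rule exI[of _ "\<lambda>_. 0"], intro ext)
  fix \<tau> \<rho> assume k: "a \<le> k" "k < b"
  have "(\<Sum>j\<in>{a..<b}. (if j = k then 1 else 0) * psi a b j \<tau> \<rho> + 0 * psis a b j \<tau> \<rho>) = (\<Sum>j\<in>{a..<b}. if j = k then psi a b j \<tau> \<rho> else 0)"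
    by (intro sum.cong) auto
  also have "\<dots> = psi a b k \<tau> \<rho>" using k by simp
  finally show "psi a b k \<tau> \<rho> = (\<Sum>j\<in>{a..<b}. (if j = k then 1 else 0) * psi a b j \<tau> \<rho> + 0 * psis a b j \<tau> \<rho>)" by simp
qed

lemma CG_psis: "a \<le> k \<Longrightarrow> k < b \<Longrightarrow> psis a b k \<in> CG a b"
  unfolding CliffGen_def
proof (rule CollectI, rule exI[of _ "\<lambda>_. 0"], rule exI[of _ "\<lambda>j. if j = k then 1 else 0"], intro ext)
  fix \<tau> \<rho> assume k: "a \<le> k" "k < b"
  have "(\<Sum>j\<in>{a..<b}. 0 * psi a b j \<tau> \<rho> + (if j = k then 1 else 0) * psis a b j \<tau> \<rho>) = (\<Sum>j\<in>{a..<b}. if j = k then psis a b j \<tau> \<rho> else 0)"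
    by (intro sum.cong) auto
  also have "\<dots> = psis a b k \<tau> \<rho>" using k by simp
  finally show "psis a b k \<tau> \<rho> = (\<Sum>j\<in>{a..<b}. 0 * psi a b j \<tau> \<rho> + (if j = k then 1 else 0) * psis a b j \<tau> \<rho>)" by simp
qed

lemma CG_solve:
  assumes "c \<noteq> 0" "F \<in> CG a b" "\<And>\<tau> \<rho>. c * Z \<tau> \<rho> + F \<tau> \<rho> = 0"
  shows "Z \<in> CG a b"
proof -
  have zeq: "Z = (\<lambda>\<tau> \<rho>. (- 1 / c) * F \<tau> \<rho>)"
  proof (intro ext)
    fix \<tau> \<rho> have "c * Z \<tau> \<rho> = - F \<tau> \<rho>" using assms(3)[of \<tau> \<rho>] by (simp add: eq_neg_iff_add_eq_0)
    thus "Z \<tau> \<rho> = (- 1 / c) * F \<tau> \<rho>" using assms(1) by (simp add: field_simps)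
  qed
  show ?thesis unfolding zeq by (rule CG_scale[OF assms(2)])
qed

lemma CG_pair:
  assumes "(\<lambda>\<tau> \<rho>. A \<tau> \<rho> + c1 * B \<tau> \<rho>) \<in> CG a b" "(\<lambda>\<tau> \<rho>. A \<tau> \<rho> + c2 * B \<tau> \<rho>) \<in> CG a b" "c1 \<noteq> c2"
  shows "A \<in> CG a b" "B \<in> CG a b"
proof -
  have b: "B = (\<lambda>\<tau> \<rho>. (1 / (c1 - c2)) * (A \<tau> \<rho> + c1 * B \<tau> \<rho>) + (- 1 / (c1 - c2)) * (A \<tau> \<rho> + c2 * B \<tau> \<rho>))"
  proof (intro ext)
    fix \<tau> \<rho>
    have "(1 / (c1 - c2)) * (A \<tau> \<rho> + c1 * B \<tau> \<rho>) + (- 1 / (c1 - c2)) * (A \<tau> \<rho> + c2 * B \<tau> \<rho>)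
        = (1 / (c1 - c2)) * ((c1 - c2) * B \<tau> \<rho>)" by (simp add: algebra_simps)
    also have "\<dots> = B \<tau> \<rho>" using assms(3) by simp
    finally show "B \<tau> \<rho> = (1 / (c1 - c2)) * (A \<tau> \<rho> + c1 * B \<tau> \<rho>) + (- 1 / (c1 - c2)) * (A \<tau> \<rho> + c2 * B \<tau> \<rho>)" by simp
  qed
  show "B \<in> CG a b" by (subst b) (rule CG_lin[OF assms(1,2)])
  have a: "A = (\<lambda>\<tau> \<rho>. 1 * (A \<tau> \<rho> + c1 * B \<tau> \<rho>) + (- c1) * B \<tau> \<rho>)"
    by (intro ext) (simp add: algebra_simps)
  show "A \<in> CG a b" by (subst a) (rule CG_lin[OF assms(1) \<open>B \<in> CG a b\<close>])
qed

lemma CG_W: "A \<in> CG a b \<Longrightarrow> B \<in> CG a b \<Longrightarrow> (\<lambda>\<tau> \<rho>. A \<tau> \<rho> + c * B \<tau> \<rho>) \<in> CG a b"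
  using CG_lin[of A a b B 1 c] by simp

lemma mmult_lin_left:
  assumes "finite K"
  shows "mmult a b P (\<lambda>\<tau> \<rho>. \<Sum>k\<in>K. c k * F k \<tau> \<rho> + d k * G k \<tau> \<rho>)
       = (\<lambda>\<tau> \<rho>. \<Sum>k\<in>K. c k * mmult a b P (F k) \<tau> \<rho> + d k * mmult a b P (G k) \<tau> \<rho>)"
proof (intro ext)
  fix \<tau> \<rho>
  show "mmult a b P (\<lambda>\<tau> \<rho>. \<Sum>k\<in>K. c k * F k \<tau> \<rho> + d k * G k \<tau> \<rho>) \<tau> \<rho>
       = (\<Sum>k\<in>K. c k * mmult a b P (F k) \<tau> \<rho> + d k * mmult a b P (G k) \<tau> \<rho>)"
  proof (cases "\<tau> \<in> Conf a b \<and> \<rho> \<in> Conf a b")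
    case False thus ?thesis by (simp add: mmult_out)
  next
    case True
    have "mmult a b P (\<lambda>\<tau> \<rho>. \<Sum>k\<in>K. c k * F k \<tau> \<rho> + d k * G k \<tau> \<rho>) \<tau> \<rho>
        = (\<Sum>\<sigma>\<in>Conf a b. \<Sum>k\<in>K. c k * (P \<tau> \<sigma> * F k \<sigma> \<rho>) + d k * (P \<tau> \<sigma> * G k \<sigma> \<rho>))"
      using True by (simp add: mmult_app sum_distrib_left algebra_simps)
    also have "\<dots> = (\<Sum>k\<in>K. \<Sum>\<sigma>\<in>Conf a b. c k * (P \<tau> \<sigma> * F k \<sigma> \<rho>) + d k * (P \<tau> \<sigma> * G k \<sigma> \<rho>))"
      by (rule sum.swap)
    also have "\<dots> = (\<Sum>k\<in>K. c k * mmult a b P (F k) \<tau> \<rho> + d k * mmult a b P (G k) \<tau> \<rho>)"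
      using True by (simp add: mmult_app sum.distrib sum_distrib_left)
    finally show ?thesis .
  qed
qed

lemma mmult_lin_right:
  assumes "finite K"
  shows "mmult a b (\<lambda>\<tau> \<rho>. \<Sum>k\<in>K. c k * F k \<tau> \<rho> + d k * G k \<tau> \<rho>) Q
       = (\<lambda>\<tau> \<rho>. \<Sum>k\<in>K. c k * mmult a b (F k) Q \<tau> \<rho> + d k * mmult a b (G k) Q \<tau> \<rho>)"
proof (intro ext)
  fix \<tau> \<rho>
  show "mmult a b (\<lambda>\<tau> \<rho>. \<Sum>k\<in>K. c k * F k \<tau> \<rho> + d k * G k \<tau> \<rho>) Q \<tau> \<rho>
       = (\<Sum>k\<in>K. c k * mmult a b (F k) Q \<tau> \<rho> + d k * mmult a b (G k) Q \<tau> \<rho>)"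
  proof (cases "\<tau> \<in> Conf a b \<and> \<rho> \<in> Conf a b")
    case False thus ?thesis by (simp add: mmult_out)
  next
    case True
    have "mmult a b (\<lambda>\<tau> \<rho>. \<Sum>k\<in>K. c k * F k \<tau> \<rho> + d k * G k \<tau> \<rho>) Q \<tau> \<rho>
        = (\<Sum>\<sigma>\<in>Conf a b. \<Sum>k\<in>K. c k * (F k \<tau> \<sigma> * Q \<sigma> \<rho>) + d k * (G k \<tau> \<sigma> * Q \<sigma> \<rho>))"
      using True by (simp add: mmult_app sum_distrib_right distrib_right mult.assoc)
    also have "\<dots> = (\<Sum>k\<in>K. \<Sum>\<sigma>\<in>Conf a b. c k * (F k \<tau> \<sigma> * Q \<sigma> \<rho>) + d k * (G k \<tau> \<sigma> * Q \<sigma> \<rho>))"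
      by (rule sum.swap)
    also have "\<dots> = (\<Sum>k\<in>K. c k * mmult a b (F k) Q \<tau> \<rho> + d k * mmult a b (G k) Q \<tau> \<rho>)"
      using True by (simp add: mmult_app sum.distrib sum_distrib_left)
    finally show ?thesis .
  qed
qed

lemma CG_sum:
  assumes "finite K" "\<And>k. k \<in> K \<Longrightarrow> F k \<in> CG a b" "\<And>k. k \<in> K \<Longrightarrow> G k \<in> CG a b"
  shows "(\<lambda>\<tau> \<rho>. \<Sum>k\<in>K. c k * F k \<tau> \<rho> + d k * G k \<tau> \<rho>) \<in> CG a b"
  using assms
proof (induction K rule: finite_induct)
  case empty thus ?case by (simp add: CG_zero)
next
  case (insert k K)
  have "(\<lambda>\<tau> \<rho>. \<Sum>j\<in>insert k K. c j * F j \<tau> \<rho> + d j * G j \<tau> \<rho>)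
      = (\<lambda>\<tau> \<rho>. (c k * F k \<tau> \<rho> + d k * G k \<tau> \<rho>) + (\<Sum>j\<in>K. c j * F j \<tau> \<rho> + d j * G j \<tau> \<rho>))"
    using insert.hyps by simp
  moreover have "(\<lambda>\<tau> \<rho>. c k * F k \<tau> \<rho> + d k * G k \<tau> \<rho>) \<in> CG a b"
    by (rule CG_lin) (simp_all add: insert.prems)
  moreover have "(\<lambda>\<tau> \<rho>. \<Sum>j\<in>K. c j * F j \<tau> \<rho> + d j * G j \<tau> \<rho>) \<in> CG a b"
    by (rule insert.IH) (simp_all add: insert.prems)
  ultimately show ?case by (simp only:) (rule CG_add)
qed

lemma cj_CG:
  assumes "M \<in> CG a b" "\<And>k. a \<le> k \<Longrightarrow> k < b \<Longrightarrow> cj a b P Q (psi a b k) \<in> CG a b"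
    "\<And>k. a \<le> k \<Longrightarrow> k < b \<Longrightarrow> cj a b P Q (psis a b k) \<in> CG a b"
  shows "cj a b P Q M \<in> CG a b"
proof -
  obtain c d where M: "M = (\<lambda>\<tau> \<rho>. \<Sum>k\<in>{a..<b}. c k * psi a b k \<tau> \<rho> + d k * psis a b k \<tau> \<rho>)"
    using assms(1) unfolding CliffGen_def by blast
  have "cj a b P Q M = (\<lambda>\<tau> \<rho>. \<Sum>k\<in>{a..<b}. c k * cj a b P Q (psi a b k) \<tau> \<rho> + d k * cj a b P Q (psis a b k) \<tau> \<rho>)"
    unfolding M cj_def by (simp only: mmult_lin_left[OF finite_atLeastLessThan_int] mmult_lin_right[OF finite_atLeastLessThan_int])
  moreover have "(\<lambda>\<tau> \<rho>. \<Sum>k\<in>{a..<b}. c k * cj a b P Q (psi a b k) \<tau> \<rho> + d k * cj a b P Q (psis a b k) \<tau> \<rho>) \<in> CG a b"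
    by (rule CG_sum) (auto intro: assms(2,3))
  ultimately show ?thesis by simp
qed


definition W :: "complex \<Rightarrow> (int \<Rightarrow> op) \<Rightarrow> (int \<Rightarrow> op) \<Rightarrow> int \<Rightarrow> op" where
  "W c F Fs k = (\<lambda>\<tau> \<rho>. F k \<tau> \<rho> + c * Fs k \<tau> \<rho>)"

lemma W_app: "W c F Fs k \<tau> \<rho> = F k \<tau> \<rho> + c * Fs k \<tau> \<rho>" by (simp add: W_def)

lemma W_psi_CG: "a \<le> k \<Longrightarrow> k < b \<Longrightarrow> W c (psi a b) (psis a b) k \<in> CG a b"
  unfolding W_def by (intro CG_W CG_psi CG_psis)

lemma nz1: "((1 + \<i>) + \<i> * s2) / 2 \<noteq> 0"
  by (simp add: complex_eq_iff s2_def)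
lemma nz2: "((1 - \<i>) - \<i> * s2) / 2 \<noteq> 0"
  by (simp add: complex_eq_iff s2_def)
lemma cTL_cTR: "cTL \<noteq> cTR"
proof
  assume "cTL = cTR"
  hence "cTL * s2 = cTR * s2" by simp
  hence "(1 - \<i>) = (1 + \<i>)" unfolding cTL_def cTR_def using s2_nz by simp
  thus False by (simp add: complex_eq_iff)
qed
lemma cBL_cBR: "cBL \<noteq> cBR"
proof
  assume "cBL = cBR"
  hence "cBL * s2 = cBR * s2" by simp
  hence "- (1 + \<i>) = (-1 + \<i>)" unfolding cBL_def cBR_def using s2_nz by simp
  thus False by (simp add: complex_eq_iff)
qed

lemma CG_lin3: "A \<in> CG a b \<Longrightarrow> (\<lambda>\<tau> \<rho>. u * A \<tau> \<rho>) \<in> CG a b" by (rule CG_scale)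

lemma Wfun: "(\<lambda>\<tau> \<rho>. F k \<tau> \<rho> + c * Fs k \<tau> \<rho>) = W c F Fs k" by (simp add: W_def)

lemma evl0: "evl L = (\<lambda>_ _. 0) \<Longrightarrow> evl L \<tau> \<rho> = 0" by simp

context
  fixes a b :: int
  assumes ab: "a < 0" "0 < b"
begin

lemma DT_sub: "DT a b \<subseteq> {a..b}" using ab by (auto simp: DT_def)
lemma DS_sub: "DS a b \<subseteq> {a..b}" using ab by (auto simp: DS_def)

abbreviation "YT k \<equiv> cj a b (TTi a b (DT a b)) (TT a b (DT a b)) (psi a b k)"
abbreviation "YTs k \<equiv> cj a b (TTi a b (DT a b)) (TT a b (DT a b)) (psis a b k)"

lemma bT_R1: "a < x \<Longrightarrow> x < b \<Longrightarrow> evl (relR1 (psi a b) (psis a b) (\<lambda>k. YT k) (\<lambda>k. YTs k) x) \<tau> \<rho> = 0"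
  by (rule evl0, rule base_T[OF natR_R1 DT_sub mR1]) (auto simp: DT_def)
lemma bT_R2: "a < x \<Longrightarrow> x < b \<Longrightarrow> evl (relR2 (psi a b) (psis a b) (\<lambda>k. YT k) (\<lambda>k. YTs k) x) \<tau> \<rho> = 0"
  by (rule evl0, rule base_T[OF natR_R2 DT_sub mR2]) (auto simp: DT_def)
lemma bT_Ba: "evl (relBa (psi a b) (psis a b) (\<lambda>k. YT k) (\<lambda>k. YTs k) a) \<tau> \<rho> = 0"
  using ab by (intro evl0 base_T[OF natR_Ba DT_sub mBa]) (auto simp: DT_def)
lemma bT_Bb: "evl (relBb (psi a b) (psis a b) (\<lambda>k. YT k) (\<lambda>k. YTs k) (b - 1)) \<tau> \<rho> = 0"
  using ab by (intro evl0 base_T[OF natR_Bb DT_sub mBb]) (auto simp: DT_def)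

lemma T_step1: "a \<le> k \<Longrightarrow> k < b \<Longrightarrow> W cTL (\<lambda>k. YT k) (\<lambda>k. YTs k) k \<in> CG a b"
proof -
  assume k: "a \<le> k" "k < b"
  show ?thesis
  proof (cases "k = a")
    case True
    show ?thesis
    proof (rule CG_solve[OF nz1])
      show "(\<lambda>\<tau> \<rho>. ((1 - \<i>) - \<i> * s2) / 2 * W cBL (psi a b) (psis a b) a \<tau> \<rho>) \<in> CG a b"
        using ab by (intro CG_scale W_psi_CG) auto
      fix \<tau> \<rho>
      show "((1 + \<i>) + \<i> * s2) / 2 * W cTL (\<lambda>k. YT k) (\<lambda>k. YTs k) k \<tau> \<rho> + ((1 - \<i>) - \<i> * s2) / 2 * W cBL (psi a b) (psis a b) a \<tau> \<rho> = 0"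
        using bT_Ba[of \<tau> \<rho>] True unfolding evl_relBa W_app by (simp add: algebra_simps)
    qed
  next
    case False
    show ?thesis
    proof (rule CG_solve[of "\<i>"])
      show "(\<lambda>\<tau> \<rho>. (1 - \<i>) * W cBL (psi a b) (psis a b) k \<tau> \<rho> + (- 1) * W cBR (psi a b) (psis a b) (k - 1) \<tau> \<rho>) \<in> CG a b"
        using k False by (intro CG_lin W_psi_CG) auto
      fix \<tau> \<rho>
      show "\<i> * W cTL (\<lambda>k. YT k) (\<lambda>k. YTs k) k \<tau> \<rho> + ((1 - \<i>) * W cBL (psi a b) (psis a b) k \<tau> \<rho> + (- 1) * W cBR (psi a b) (psis a b) (k - 1) \<tau> \<rho>) = 0"
        using bT_R1[of k \<tau> \<rho>] k False unfolding evl_relR1 W_app by (simp add: algebra_simps)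
    qed simp
  qed
qed

lemma T_step2: "a \<le> k \<Longrightarrow> k < b \<Longrightarrow> W cTR (\<lambda>k. YT k) (\<lambda>k. YTs k) k \<in> CG a b"
proof -
  assume k: "a \<le> k" "k < b"
  show ?thesis
  proof (cases "k = b - 1")
    case True
    have "W cTR (\<lambda>k. YT k) (\<lambda>k. YTs k) (b - 1) \<in> CG a b"
    proof (rule CG_solve[OF nz2])
      show "(\<lambda>\<tau> \<rho>. ((1 + \<i>) + \<i> * s2) / 2 * W cBR (psi a b) (psis a b) (b - 1) \<tau> \<rho>) \<in> CG a b"
        using ab by (intro CG_scale W_psi_CG) auto
      fix \<tau> \<rho>
      show "((1 - \<i>) - \<i> * s2) / 2 * W cTR (\<lambda>k. YT k) (\<lambda>k. YTs k) (b - 1) \<tau> \<rho> + ((1 + \<i>) + \<i> * s2) / 2 * W cBR (psi a b) (psis a b) (b - 1) \<tau> \<rho> = 0"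
        using bT_Bb[of \<tau> \<rho>] unfolding evl_relBb W_app by (simp add: algebra_simps)
    qed
    thus ?thesis using True by simp
  next
    case False
    have k1: "k + 1 - 1 = k" by simp
    show ?thesis
    proof (rule CG_solve[of "- 1"])
      show "(\<lambda>\<tau> \<rho>. (- \<i>) * W cBL (psi a b) (psis a b) (k + 1) \<tau> \<rho> + (1 + \<i>) * W cTL (\<lambda>k. YT k) (\<lambda>k. YTs k) (k + 1) \<tau> \<rho>) \<in> CG a b"
        using k False by (intro CG_lin W_psi_CG T_step1) auto
      fix \<tau> \<rho>
      show "(- 1) * W cTR (\<lambda>k. YT k) (\<lambda>k. YTs k) k \<tau> \<rho> + ((- \<i>) * W cBL (psi a b) (psis a b) (k + 1) \<tau> \<rho> + (1 + \<i>) * W cTL (\<lambda>k. YT k) (\<lambda>k. YTs k) (k + 1) \<tau> \<rho>) = 0"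
        using bT_R2[of "k + 1" \<tau> \<rho>] k False unfolding evl_relR2 W_app k1 by (simp add: algebra_simps)
    qed simp
  qed
qed

lemma YT_CG: "a \<le> k \<Longrightarrow> k < b \<Longrightarrow> YT k \<in> CG a b \<and> YTs k \<in> CG a b"
  using CG_pair[OF T_step1[unfolded W_def] T_step2[unfolded W_def] cTL_cTR] by blast

abbreviation "XS k \<equiv> cj a b (TT a b (DS a b)) (TTi a b (DS a b)) (psi a b k)"
abbreviation "XSs k \<equiv> cj a b (TT a b (DS a b)) (TTi a b (DS a b)) (psis a b k)"

lemma bS_R1: "a < x \<Longrightarrow> x < b \<Longrightarrow> x \<noteq> 0 \<Longrightarrow> evl (relR1 (\<lambda>k. XS k) (\<lambda>k. XSs k) (psi a b) (psis a b) x) \<tau> \<rho> = 0"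
  by (rule evl0, rule base_S[OF natR_R1 DS_sub mR1]) (auto simp: DS_def)
lemma bS_R2: "a < x \<Longrightarrow> x < b \<Longrightarrow> x \<noteq> 0 \<Longrightarrow> evl (relR2 (\<lambda>k. XS k) (\<lambda>k. XSs k) (psi a b) (psis a b) x) \<tau> \<rho> = 0"
  by (rule evl0, rule base_S[OF natR_R2 DS_sub mR2]) (auto simp: DS_def)
lemma bS_Ba: "k = a \<or> k = 0 \<Longrightarrow> evl (relBa (\<lambda>k. XS k) (\<lambda>k. XSs k) (psi a b) (psis a b) k) \<tau> \<rho> = 0"
  using ab by (intro evl0 base_S[OF natR_Ba DS_sub mBa]) (auto simp: DS_def)
lemma bS_Bb: "k = b - 1 \<or> k = -1 \<Longrightarrow> evl (relBb (\<lambda>k. XS k) (\<lambda>k. XSs k) (psi a b) (psis a b) k) \<tau> \<rho> = 0"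
  using ab by (intro evl0 base_S[OF natR_Bb DS_sub mBb]) (auto simp: DS_def)

lemma nz1': "((1 - \<i>) - \<i> * s2) / 2 \<noteq> 0" by (rule nz2)

lemma S_step1: "a \<le> k \<Longrightarrow> k < b \<Longrightarrow> W cBL (\<lambda>k. XS k) (\<lambda>k. XSs k) k \<in> CG a b"
proof -
  assume k: "a \<le> k" "k < b"
  show ?thesis
  proof (cases "k = a \<or> k = 0")
    case True
    show ?thesis
    proof (rule CG_solve[OF nz2])
      show "(\<lambda>\<tau> \<rho>. ((1 + \<i>) + \<i> * s2) / 2 * W cTL (psi a b) (psis a b) k \<tau> \<rho>) \<in> CG a b"
        using k by (intro CG_scale W_psi_CG) auto
      fix \<tau> \<rho>
      show "((1 - \<i>) - \<i> * s2) / 2 * W cBL (\<lambda>k. XS k) (\<lambda>k. XSs k) k \<tau> \<rho> + ((1 + \<i>) + \<i> * s2) / 2 * W cTL (psi a b) (psis a b) k \<tau> \<rho> = 0"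
        using bS_Ba[OF True, of \<tau> \<rho>] unfolding evl_relBa W_app by (simp add: algebra_simps)
    qed
  next
    case False
    show ?thesis
    proof (rule CG_solve[of "- \<i>"])
      show "(\<lambda>\<tau> \<rho>. (1 + \<i>) * W cTL (psi a b) (psis a b) k \<tau> \<rho> + (- 1) * W cTR (psi a b) (psis a b) (k - 1) \<tau> \<rho>) \<in> CG a b"
        using k False by (intro CG_lin W_psi_CG) auto
      fix \<tau> \<rho>
      show "(- \<i>) * W cBL (\<lambda>k. XS k) (\<lambda>k. XSs k) k \<tau> \<rho> + ((1 + \<i>) * W cTL (psi a b) (psis a b) k \<tau> \<rho> + (- 1) * W cTR (psi a b) (psis a b) (k - 1) \<tau> \<rho>) = 0"
        using bS_R2[of k \<tau> \<rho>] k False unfolding evl_relR2 W_app by (simp add: algebra_simps)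
    qed simp
  qed
qed

lemma S_step2: "a \<le> k \<Longrightarrow> k < b \<Longrightarrow> W cBR (\<lambda>k. XS k) (\<lambda>k. XSs k) k \<in> CG a b"
proof -
  assume k: "a \<le> k" "k < b"
  show ?thesis
  proof (cases "k = b - 1 \<or> k = -1")
    case True
    show ?thesis
    proof (rule CG_solve[OF nz1])
      show "(\<lambda>\<tau> \<rho>. ((1 - \<i>) - \<i> * s2) / 2 * W cTR (psi a b) (psis a b) k \<tau> \<rho>) \<in> CG a b"
        using k by (intro CG_scale W_psi_CG) auto
      fix \<tau> \<rho>
      show "((1 + \<i>) + \<i> * s2) / 2 * W cBR (\<lambda>k. XS k) (\<lambda>k. XSs k) k \<tau> \<rho> + ((1 - \<i>) - \<i> * s2) / 2 * W cTR (psi a b) (psis a b) k \<tau> \<rho> = 0"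
        using bS_Bb[OF True, of \<tau> \<rho>] unfolding evl_relBb W_app by (simp add: algebra_simps)
    qed
  next
    case False
    have k1: "k + 1 - 1 = k" by simp
    show ?thesis
    proof (rule CG_solve[of "- 1"])
      show "(\<lambda>\<tau> \<rho>. (1 - \<i>) * W cBL (\<lambda>k. XS k) (\<lambda>k. XSs k) (k + 1) \<tau> \<rho> + \<i> * W cTL (psi a b) (psis a b) (k + 1) \<tau> \<rho>) \<in> CG a b"
        using k False by (intro CG_lin W_psi_CG S_step1) auto
      fix \<tau> \<rho>
      show "(- 1) * W cBR (\<lambda>k. XS k) (\<lambda>k. XSs k) k \<tau> \<rho> + ((1 - \<i>) * W cBL (\<lambda>k. XS k) (\<lambda>k. XSs k) (k + 1) \<tau> \<rho> + \<i> * W cTL (psi a b) (psis a b) (k + 1) \<tau> \<rho>) = 0"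
        using bS_R1[of "k + 1" \<tau> \<rho>] k False unfolding evl_relR1 W_app k1 by (simp add: algebra_simps)
    qed simp
  qed
qed

lemma XS_CG: "a \<le> k \<Longrightarrow> k < b \<Longrightarrow> XS k \<in> CG a b \<and> XSs k \<in> CG a b"
  using CG_pair[OF S_step1[unfolded W_def] S_step2[unfolded W_def] cBL_cBR] by blast

lemma powT_CG: "a \<le> k \<Longrightarrow> k < b \<Longrightarrow>
   cj a b (mpow a b (TTi a b (DT a b)) n) (mpow a b (TT a b (DT a b)) n) (psi a b k) \<in> CG a b \<and>
   cj a b (mpow a b (TTi a b (DT a b)) n) (mpow a b (TT a b (DT a b)) n) (psis a b k) \<in> CG a b"
  (is "_ \<Longrightarrow> _ \<Longrightarrow> ?G n k")
proof -
  let ?P = "\<lambda>n. cj a b (mpow a b (TTi a b (DT a b)) n) (mpow a b (TT a b (DT a b)) n)"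
  let ?Q = "cj a b (TTi a b (DT a b)) (TT a b (DT a b))"
  show "a \<le> k \<Longrightarrow> k < b \<Longrightarrow> ?G n k"
proof (induction n arbitrary: k)
  case 0 thus ?case by (simp add: cj_mid psi_Ops psis_Ops CG_psi CG_psis)
next
  case (Suc n)
  have ih: "\<And>j. a \<le> j \<Longrightarrow> j < b \<Longrightarrow> ?P n (psi a b j) \<in> CG a b" using Suc.IH by blast
  have ihs: "\<And>j. a \<le> j \<Longrightarrow> j < b \<Longrightarrow> ?P n (psis a b j) \<in> CG a b" using Suc.IH by blast
  have c1: "?P n (?Q (psi a b k)) \<in> CG a b" by (rule cj_CG[OF _ ih ihs]) (use YT_CG[OF Suc.prems] in blast)
  have c2: "?P n (?Q (psis a b k)) \<in> CG a b" by (rule cj_CG[OF _ ih ihs]) (use YT_CG[OF Suc.prems] in blast)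
  show ?case unfolding cj_comp_T[OF TT_Ops TTi_Ops] using c1 c2 by blast
qed
qed

lemma powS_CG: "a \<le> k \<Longrightarrow> k < b \<Longrightarrow>
   cj a b (mpow a b (TT a b (DS a b)) n) (mpow a b (TTi a b (DS a b)) n) (psi a b k) \<in> CG a b \<and>
   cj a b (mpow a b (TT a b (DS a b)) n) (mpow a b (TTi a b (DS a b)) n) (psis a b k) \<in> CG a b"
  (is "_ \<Longrightarrow> _ \<Longrightarrow> ?G n k")
proof -
  let ?P = "\<lambda>n. cj a b (mpow a b (TT a b (DS a b)) n) (mpow a b (TTi a b (DS a b)) n)"
  let ?Q = "cj a b (TT a b (DS a b)) (TTi a b (DS a b))"
  show "a \<le> k \<Longrightarrow> k < b \<Longrightarrow> ?G n k"
proof (induction n arbitrary: k)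
  case 0 thus ?case by (simp add: cj_mid psi_Ops psis_Ops CG_psi CG_psis)
next
  case (Suc n)
  have ih: "\<And>j. a \<le> j \<Longrightarrow> j < b \<Longrightarrow> ?P n (psi a b j) \<in> CG a b" using Suc.IH by blast
  have ihs: "\<And>j. a \<le> j \<Longrightarrow> j < b \<Longrightarrow> ?P n (psis a b j) \<in> CG a b" using Suc.IH by blast
  have c1: "?P n (?Q (psi a b k)) \<in> CG a b" by (rule cj_CG[OF _ ih ihs]) (use XS_CG[OF Suc.prems] in blast)
  have c2: "?P n (?Q (psis a b k)) \<in> CG a b" by (rule cj_CG[OF _ ih ihs]) (use XS_CG[OF Suc.prems] in blast)
  show ?case unfolding cj_comp_S[OF TT_Ops TTi_Ops] using c1 c2 by blast
qed
qed

lemma hp_CG: "a \<le> k \<Longrightarrow> k < b \<Longrightarrow> hp a b k y \<in> CG a b \<and> hps a b k y \<in> CG a b"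
proof (cases "0 \<le> y")
  case True
  assume k: "a \<le> k" "k < b"
  show ?thesis using True ab powT_CG[OF k, of "nat y"] by (simp add: hor_nonneg)
next
  case False
  assume k: "a \<le> k" "k < b"
  show ?thesis using False ab powS_CG[OF k, of "nat (- y)"] by (simp add: hor_neg)
qed

end


section \<open>Corner coefficients\<close>

definition cc :: "int \<Rightarrow> int \<Rightarrow> complex \<Rightarrow> complex" where
  "cc x y v = \<i> * complex_of_real (cmod (v - face_centre x y)) / (v - face_centre x y)"

lemma pt_inj[simp]: "pt x y = pt x' y' \<longleftrightarrow> x = x' \<and> y = y'"
  unfolding pt_def by simp

lemma cmod_half: "cmod (Complex (u / 2) (w / 2)) = sqrt 2 / 2" if "u\<^sup>2 = 1" "w\<^sup>2 = 1" for u w :: real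
proof -
  have "cmod (Complex (u / 2) (w / 2)) = sqrt (1 / 2)"
    unfolding cmod_def using that by (simp add: power_divide)
  also have "\<dots> = sqrt 2 / 2" by (simp add: real_sqrt_divide field_simps)
  finally show ?thesis .
qed

lemma cc_gen:
  assumes "u\<^sup>2 = 1" "w\<^sup>2 = 1"
  shows "\<i> * complex_of_real (cmod (Complex (u / 2) (w / 2))) / Complex (u / 2) (w / 2) = \<i> * (u - \<i> * w) / s2"
proof -
  have d: "Complex (u / 2) (w / 2) = (complex_of_real u + \<i> * complex_of_real w) / 2"
    by (simp add: complex_eq_iff)
  have n: "complex_of_real u + \<i> * complex_of_real w \<noteq> 0" using assms by (auto simp: complex_eq_iff)
  have uw: "(complex_of_real u + \<i> * complex_of_real w) * (complex_of_real u - \<i> * complex_of_real w) = 2"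
    using assms by (simp add: algebra_simps power2_eq_square flip: of_real_mult)
  let ?Z = "complex_of_real u + \<i> * complex_of_real w"
  let ?Zc = "complex_of_real u - \<i> * complex_of_real w"
  have l: "\<i> * complex_of_real (sqrt 2 / 2) / (?Z / 2) = \<i> * s2 / ?Z"
    by (simp add: s2_def)
  have "\<i> * s2 / ?Z = \<i> * ?Zc / s2"
  proof (subst frac_eq_eq[OF n s2_nz])
    show "\<i> * s2 * s2 = \<i> * ?Zc * ?Z" using uw s2_sq by (simp add: mult.assoc mult.commute)
  qed
  thus ?thesis by (subst cmod_half[OF assms], subst d, subst l) (simp add: algebra_simps)
qed

lemma cc_vals:
  "cc x y (pt x y) = cBL" "cc x y (pt (x + 1) y) = cBR"
  "cc x y (pt x (y + 1)) = cTL" "cc x y (pt (x + 1) (y + 1)) = cTR"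
proof -
  have e1: "pt x y - face_centre x y = Complex ((-1) / 2) ((-1) / 2)"
    by (simp add: pt_def face_centre_def complex_eq_iff)
  have e2: "pt (x + 1) y - face_centre x y = Complex (1 / 2) ((-1) / 2)"
    by (simp add: pt_def face_centre_def complex_eq_iff)
  have e3: "pt x (y + 1) - face_centre x y = Complex ((-1) / 2) (1 / 2)"
    by (simp add: pt_def face_centre_def complex_eq_iff)
  have e4: "pt (x + 1) (y + 1) - face_centre x y = Complex (1 / 2) (1 / 2)"
    by (simp add: pt_def face_centre_def complex_eq_iff)
  have g1: "\<i> * complex_of_real (cmod (Complex ((-1) / 2) ((-1) / 2))) / Complex ((-1) / 2) ((-1) / 2) = \<i> * (complex_of_real (-1) - \<i> * complex_of_real (-1)) / s2"
    by (rule cc_gen) simp_all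
  have g2: "\<i> * complex_of_real (cmod (Complex (1 / 2) ((-1) / 2))) / Complex (1 / 2) ((-1) / 2) = \<i> * (complex_of_real 1 - \<i> * complex_of_real (-1)) / s2"
    by (rule cc_gen) simp_all
  have g3: "\<i> * complex_of_real (cmod (Complex ((-1) / 2) (1 / 2))) / Complex ((-1) / 2) (1 / 2) = \<i> * (complex_of_real (-1) - \<i> * complex_of_real 1) / s2"
    by (rule cc_gen) simp_all
  have g4: "\<i> * complex_of_real (cmod (Complex (1 / 2) (1 / 2))) / Complex (1 / 2) (1 / 2) = \<i> * (complex_of_real 1 - \<i> * complex_of_real 1) / s2"
    by (rule cc_gen) simp_all
  show "cc x y (pt x y) = cBL" unfolding cc_def e1 g1
    by (simp add: cBL_def algebra_simps)
  show "cc x y (pt (x + 1) y) = cBR" unfolding cc_def e2 g2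
    by (simp add: cBR_def algebra_simps)
  show "cc x y (pt x (y + 1)) = cTL" unfolding cc_def e3 g3
    by (simp add: cTL_def algebra_simps)
  show "cc x y (pt (x + 1) (y + 1)) = cTR" unfolding cc_def e4 g4
    by (simp add: cTR_def algebra_simps)
qed


definition Lphs :: "int \<Rightarrow> int \<Rightarrow> int \<Rightarrow> int \<Rightarrow> op" where
  "Lphs a b k y = (\<lambda>\<tau> \<rho>. ((hp a b k y \<tau> \<rho> + cBL * hps a b k y \<tau> \<rho>) - (hp a b k (y + 1) \<tau> \<rho> + cTL * hps a b k (y + 1) \<tau> \<rho>)) / (cBL - cTL))"
definition Lph :: "int \<Rightarrow> int \<Rightarrow> int \<Rightarrow> int \<Rightarrow> op" where
  "Lph a b k y = (\<lambda>\<tau> \<rho>. (hp a b k y \<tau> \<rho> + cBL * hps a b k y \<tau> \<rho>) - cBL * Lphs a b k y \<tau> \<rho>)"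
definition Rphs :: "int \<Rightarrow> int \<Rightarrow> int \<Rightarrow> int \<Rightarrow> op" where
  "Rphs a b k y = (\<lambda>\<tau> \<rho>. ((hp a b k y \<tau> \<rho> + cBR * hps a b k y \<tau> \<rho>) - (hp a b k (y + 1) \<tau> \<rho> + cTR * hps a b k (y + 1) \<tau> \<rho>)) / (cBR - cTR))"
definition Rph :: "int \<Rightarrow> int \<Rightarrow> int \<Rightarrow> int \<Rightarrow> op" where
  "Rph a b k y = (\<lambda>\<tau> \<rho>. (hp a b k y \<tau> \<rho> + cBR * hps a b k y \<tau> \<rho>) - cBR * Rphs a b k y \<tau> \<rho>)"

lemma cBL_cTL: "cBL \<noteq> cTL"
proof
  assume "cBL = cTL"
  hence "cBL * s2 = cTL * s2" by simp
  hence "- (1 + \<i>) = (1 - \<i>)" unfolding cBL_def cTL_def using s2_nz by simp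
  thus False by (simp add: complex_eq_iff)
qed
lemma cBR_cTR: "cBR \<noteq> cTR"
proof
  assume "cBR = cTR"
  hence "cBR * s2 = cTR * s2" by simp
  hence "(-1 + \<i>) = (1 + \<i>)" unfolding cBR_def cTR_def using s2_nz by simp
  thus False by (simp add: complex_eq_iff)
qed

lemma L_gen: "Lph a b k y \<tau> \<rho> + c * Lphs a b k y \<tau> \<rho>
   = (cTL - c) / (cTL - cBL) * (hp a b k y \<tau> \<rho> + cBL * hps a b k y \<tau> \<rho>) + (c - cBL) / (cTL - cBL) * (hp a b k (y + 1) \<tau> \<rho> + cTL * hps a b k (y + 1) \<tau> \<rho>)"
proof -
  have n: "cTL - cBL \<noteq> 0" "cBL - cTL \<noteq> 0" using cBL_cTL by auto
  show ?thesis unfolding Lph_def Lphs_def using n by (simp add: field_simps)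
qed

lemma R_gen: "Rph a b k y \<tau> \<rho> + c * Rphs a b k y \<tau> \<rho>
   = (cTR - c) / (cTR - cBR) * (hp a b k y \<tau> \<rho> + cBR * hps a b k y \<tau> \<rho>) + (c - cBR) / (cTR - cBR) * (hp a b k (y + 1) \<tau> \<rho> + cTR * hps a b k (y + 1) \<tau> \<rho>)"
proof -
  have n: "cTR - cBR \<noteq> 0" "cBR - cTR \<noteq> 0" using cBR_cTR by auto
  show ?thesis unfolding Rph_def Rphs_def using n by (simp add: field_simps)
qed

lemma L_BL: "Lph a b k y \<tau> \<rho> + cBL * Lphs a b k y \<tau> \<rho> = hp a b k y \<tau> \<rho> + cBL * hps a b k y \<tau> \<rho>"
  unfolding L_gen using cBL_cTL by (simp add: field_simps)
lemma L_TL: "Lph a b k y \<tau> \<rho> + cTL * Lphs a b k y \<tau> \<rho> = hp a b k (y + 1) \<tau> \<rho> + cTL * hps a b k (y + 1) \<tau> \<rho>"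
  unfolding L_gen using cBL_cTL by (simp add: field_simps)
lemma R_BR: "Rph a b k y \<tau> \<rho> + cBR * Rphs a b k y \<tau> \<rho> = hp a b k y \<tau> \<rho> + cBR * hps a b k y \<tau> \<rho>"
  unfolding R_gen using cBR_cTR by (simp add: field_simps)
lemma R_TR: "Rph a b k y \<tau> \<rho> + cTR * Rphs a b k y \<tau> \<rho> = hp a b k (y + 1) \<tau> \<rho> + cTR * hps a b k (y + 1) \<tau> \<rho>"
  unfolding R_gen using cBR_cTR by (simp add: field_simps)

abbreviation "rowA a b y \<equiv> (\<lambda>k. hp a b k y)"
abbreviation "rowAs a b y \<equiv> (\<lambda>k. hps a b k y)"

lemma L_LC: "Lph a b k y \<tau> \<rho> + c * Lphs a b k y \<tau> \<rho> = evl (LCL c (rowA a b y) (rowAs a b y) (rowA a b (y + 1)) (rowAs a b (y + 1)) k) \<tau> \<rho>"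
  unfolding L_gen evl_LCL ..
lemma R_LC: "Rph a b k y \<tau> \<rho> + c * Rphs a b k y \<tau> \<rho> = evl (LCR c (rowA a b y) (rowAs a b y) (rowA a b (y + 1)) (rowAs a b (y + 1)) k) \<tau> \<rho>"
  unfolding R_gen evl_LCR ..

context
  fixes a b :: int
  assumes ab: "a < 0" "0 < b"
begin

lemma rowR1: "a < x \<Longrightarrow> x < b \<Longrightarrow> 0 \<le> y \<or> x \<noteq> 0 \<Longrightarrow>
  evl (relR1 (rowA a b y) (rowAs a b y) (rowA a b (y + 1)) (rowAs a b (y + 1)) x) \<tau> \<rho> = 0"
proof -
  assume x: "a < x" "x < b" "0 \<le> y \<or> x \<noteq> 0"
  show ?thesis
  proof (cases "0 \<le> y")
    case True
    show ?thesis by (rule evl0, rule row_T[OF natR_R1 True mR1]) (use x ab in \<open>auto simp: DT_def\<close>)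
  next
    case False
    show ?thesis by (rule evl0, rule row_S[OF natR_R1 _ mR1]) (use x ab False in \<open>auto simp: DS_def\<close>)
  qed
qed

lemma rowR2: "a < x \<Longrightarrow> x < b \<Longrightarrow> 0 \<le> y \<or> x \<noteq> 0 \<Longrightarrow>
  evl (relR2 (rowA a b y) (rowAs a b y) (rowA a b (y + 1)) (rowAs a b (y + 1)) x) \<tau> \<rho> = 0"
proof -
  assume x: "a < x" "x < b" "0 \<le> y \<or> x \<noteq> 0"
  show ?thesis
  proof (cases "0 \<le> y")
    case True
    show ?thesis by (rule evl0, rule row_T[OF natR_R2 True mR2]) (use x ab in \<open>auto simp: DT_def\<close>)
  next
    case False
    show ?thesis by (rule evl0, rule row_S[OF natR_R2 _ mR2]) (use x ab False in \<open>auto simp: DS_def\<close>)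
  qed
qed

lemma rowBa: "k = a \<or> (k = 0 \<and> y < 0) \<Longrightarrow>
  evl (relBa (rowA a b y) (rowAs a b y) (rowA a b (y + 1)) (rowAs a b (y + 1)) k) \<tau> \<rho> = 0"
proof -
  assume k: "k = a \<or> (k = 0 \<and> y < 0)"
  show ?thesis
  proof (cases "0 \<le> y")
    case True
    show ?thesis by (rule evl0, rule row_T[OF natR_Ba True mBa]) (use k ab True in \<open>auto simp: DT_def\<close>)
  next
    case False
    show ?thesis by (rule evl0, rule row_S[OF natR_Ba _ mBa]) (use k ab False in \<open>auto simp: DS_def\<close>)
  qed
qed

lemma rowBb: "k = b - 1 \<or> (k = -1 \<and> y < 0) \<Longrightarrow>
  evl (relBb (rowA a b y) (rowAs a b y) (rowA a b (y + 1)) (rowAs a b (y + 1)) k) \<tau> \<rho> = 0"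
proof -
  assume k: "k = b - 1 \<or> (k = -1 \<and> y < 0)"
  show ?thesis
  proof (cases "0 \<le> y")
    case True
    show ?thesis by (rule evl0, rule row_T[OF natR_Bb True mBb]) (use k ab True in \<open>auto simp: DT_def\<close>)
  next
    case False
    show ?thesis by (rule evl0, rule row_S[OF natR_Bb _ mBb]) (use k ab False in \<open>auto simp: DS_def\<close>)
  qed
qed

lemma cons_BR: "a < x \<Longrightarrow> x < b \<Longrightarrow> 0 \<le> y \<or> x \<noteq> 0 \<Longrightarrow>
   Lph a b x y \<tau> \<rho> + cBR * Lphs a b x y \<tau> \<rho> = hp a b (x - 1) y \<tau> \<rho> + cBR * hps a b (x - 1) y \<tau> \<rho>"
  using rowR1[of x y \<tau> \<rho>] unfolding relR1_def evl_append L_LC by (simp add: evl_def algebra_simps)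

lemma cons_TR: "a < x \<Longrightarrow> x < b \<Longrightarrow> 0 \<le> y \<or> x \<noteq> 0 \<Longrightarrow>
   Lph a b x y \<tau> \<rho> + cTR * Lphs a b x y \<tau> \<rho> = hp a b (x - 1) (y + 1) \<tau> \<rho> + cTR * hps a b (x - 1) (y + 1) \<tau> \<rho>"
  using rowR2[of x y \<tau> \<rho>] unfolding relR2_def evl_append L_LC by (simp add: evl_def algebra_simps)

lemma bdry_L: "k = a \<or> (k = 0 \<and> y < 0) \<Longrightarrow> Lph a b k y \<tau> \<rho> + \<i> * Lphs a b k y \<tau> \<rho> = 0"
  using rowBa[of k y \<tau> \<rho>] unfolding relBa_def L_LC by simp

lemma bdry_R: "k = b - 1 \<or> (k = -1 \<and> y < 0) \<Longrightarrow> Rph a b k y \<tau> \<rho> + (- \<i>) * Rphs a b k y \<tau> \<rho> = 0"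
  using rowBb[of k y \<tau> \<rho>] unfolding relBb_def R_LC by simp

lemma L_CG: "a \<le> k \<Longrightarrow> k < b \<Longrightarrow> Lph a b k y \<in> CG a b \<and> Lphs a b k y \<in> CG a b"
proof -
  assume k: "a \<le> k" "k < b"
  have w1: "W cBL (rowA a b y) (rowAs a b y) k \<in> CG a b" unfolding W_def using hp_CG[OF ab k] by (intro CG_W) auto
  have w2: "W cTL (rowA a b (y + 1)) (rowAs a b (y + 1)) k \<in> CG a b" unfolding W_def using hp_CG[OF ab k] by (intro CG_W) auto
  have s: "Lphs a b k y = (\<lambda>\<tau> \<rho>. (1 / (cBL - cTL)) * W cBL (rowA a b y) (rowAs a b y) k \<tau> \<rho> + (- 1 / (cBL - cTL)) * W cTL (rowA a b (y + 1)) (rowAs a b (y + 1)) k \<tau> \<rho>)"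
    unfolding Lphs_def W_def by (intro ext) (simp add: diff_divide_distrib)
  have sC: "Lphs a b k y \<in> CG a b" unfolding s by (rule CG_lin[OF w1 w2])
  have p: "Lph a b k y = (\<lambda>\<tau> \<rho>. 1 * W cBL (rowA a b y) (rowAs a b y) k \<tau> \<rho> + (- cBL) * Lphs a b k y \<tau> \<rho>)"
    unfolding Lph_def W_def by (intro ext) simp
  have pC: "Lph a b k y \<in> CG a b" unfolding p by (rule CG_lin[OF w1 sC])
  show ?thesis using sC pC by blast
qed

lemma R_CG: "a \<le> k \<Longrightarrow> k < b \<Longrightarrow> Rph a b k y \<in> CG a b \<and> Rphs a b k y \<in> CG a b"
proof -
  assume k: "a \<le> k" "k < b"
  have w1: "W cBR (rowA a b y) (rowAs a b y) k \<in> CG a b" unfolding W_def using hp_CG[OF ab k] by (intro CG_W) auto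
  have w2: "W cTR (rowA a b (y + 1)) (rowAs a b (y + 1)) k \<in> CG a b" unfolding W_def using hp_CG[OF ab k] by (intro CG_W) auto
  have s: "Rphs a b k y = (\<lambda>\<tau> \<rho>. (1 / (cBR - cTR)) * W cBR (rowA a b y) (rowAs a b y) k \<tau> \<rho> + (- 1 / (cBR - cTR)) * W cTR (rowA a b (y + 1)) (rowAs a b (y + 1)) k \<tau> \<rho>)"
    unfolding Rphs_def W_def by (intro ext) (simp add: diff_divide_distrib)
  have sC: "Rphs a b k y \<in> CG a b" unfolding s by (rule CG_lin[OF w1 w2])
  have p: "Rph a b k y = (\<lambda>\<tau> \<rho>. 1 * W cBR (rowA a b y) (rowAs a b y) k \<tau> \<rho> + (- cBR) * Rphs a b k y \<tau> \<rho>)"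
    unfolding Rph_def W_def by (intro ext) simp
  have pC: "Rph a b k y \<in> CG a b" unfolding p by (rule CG_lin[OF w1 sC])
  show ?thesis using sC pC by blast
qed

end


definition PH :: "int \<Rightarrow> int \<Rightarrow> edge \<Rightarrow> op" where
  "PH a b e = (case e of Hor k y \<Rightarrow> hp a b k y | Ver x y \<Rightarrow> (if x < b then Lph a b x y else Rph a b (b - 1) y)
     | SlitM m \<Rightarrow> Rph a b (-1) m | SlitP m \<Rightarrow> Lph a b 0 m)"
definition PHS :: "int \<Rightarrow> int \<Rightarrow> edge \<Rightarrow> op" where
  "PHS a b e = (case e of Hor k y \<Rightarrow> hps a b k y | Ver x y \<Rightarrow> (if x < b then Lphs a b x y else Rphs a b (b - 1) y)
     | SlitM m \<Rightarrow> Rphs a b (-1) m | SlitP m \<Rightarrow> Lphs a b 0 m)"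

lemma madd_msc: "madd A (msc c B) = (\<lambda>\<tau> \<rho>. A \<tau> \<rho> + c * B \<tau> \<rho>)"
  by (simp add: madd_def msc_def)

definition Kf :: "int \<Rightarrow> int \<Rightarrow> int \<Rightarrow> int \<Rightarrow> complex \<Rightarrow> op" where
  "Kf a b x y v = (if v = pt x y \<or> v = pt (x + 1) y
      then madd (PH a b (Hor x y)) (msc (cc x y v) (PHS a b (Hor x y)))
      else madd (PH a b (Hor x (y + 1))) (msc (cc x y v) (PHS a b (Hor x (y + 1)))))"

context
  fixes a b :: int
  assumes ab: "a < 0" "0 < b"
begin

lemma PH_LE: "x < b \<Longrightarrow> PH a b (if x = 0 \<and> y < 0 then SlitP y else Ver x y) = Lph a b x y"
  by (auto simp: PH_def)
lemma PHS_LE: "x < b \<Longrightarrow> PHS a b (if x = 0 \<and> y < 0 then SlitP y else Ver x y) = Lphs a b x y"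
  by (auto simp: PHS_def)

lemma RE_cases:
  assumes "a \<le> x" "x < b"
  shows "(\<forall>\<tau> \<rho>. PH a b (if x + 1 = 0 \<and> y < 0 then SlitM y else Ver (x + 1) y) \<tau> \<rho> + cBR * PHS a b (if x + 1 = 0 \<and> y < 0 then SlitM y else Ver (x + 1) y) \<tau> \<rho>
           = hp a b x y \<tau> \<rho> + cBR * hps a b x y \<tau> \<rho>) \<and>
         (\<forall>\<tau> \<rho>. PH a b (if x + 1 = 0 \<and> y < 0 then SlitM y else Ver (x + 1) y) \<tau> \<rho> + cTR * PHS a b (if x + 1 = 0 \<and> y < 0 then SlitM y else Ver (x + 1) y) \<tau> \<rho>
           = hp a b x (y + 1) \<tau> \<rho> + cTR * hps a b x (y + 1) \<tau> \<rho>)"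
proof (cases "x + 1 = 0 \<and> y < 0")
  case True
  hence x: "x = -1" by simp
  have eq: "(if x + 1 = 0 \<and> y < 0 then SlitM y else Ver (x + 1) y) = SlitM y" using True by simp
  show ?thesis unfolding eq by (simp add: PH_def PHS_def x R_BR R_TR)
next
  case False
  have eq: "(if x + 1 = 0 \<and> y < 0 then SlitM y else Ver (x + 1) y) = Ver (x + 1) y" using False by simp
  show ?thesis
  proof (cases "x + 1 < b")
    case True
    have c: "a < x + 1" "x + 1 < b" "0 \<le> y \<or> x + 1 \<noteq> 0" using assms True False by auto
    show ?thesis using True cons_BR[OF ab c] cons_TR[OF ab c] by (simp add: eq PH_def PHS_def)
  next
    case F2: False
    hence x: "x = b - 1" using assms by simp
    show ?thesis using F2 by (simp add: eq PH_def PHS_def x R_BR R_TR)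
  qed
qed

lemma face_corner:
  assumes x: "a \<le> x" "x < b" and z: "z \<in> face_edges x y" and v: "v \<in> endpoints z"
  shows "madd (PH a b z) (msc (cc x y v) (PHS a b z)) = Kf a b x y v"
proof -
  consider "z = Hor x y" | "z = Hor x (y + 1)" | "z = (if x = 0 \<and> y < 0 then SlitP y else Ver x y)"
    | "z = (if x + 1 = 0 \<and> y < 0 then SlitM y else Ver (x + 1) y)"
    using z unfolding face_edges_def by blast
  then show ?thesis
  proof cases
    case 1
    thus ?thesis using v by (auto simp: Kf_def)
  next
    case 2
    thus ?thesis using v by (auto simp: Kf_def)
  next
    case 3
    have ep: "endpoints z = {pt x y, pt x (y + 1)}" using 3 by auto
    have ph: "PH a b z = Lph a b x y" "PHS a b z = Lphs a b x y" using 3 x PH_LE PHS_LE by auto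
    show ?thesis
    proof (cases "v = pt x y")
      case True
      show ?thesis unfolding ph Kf_def madd_msc using True
        by (simp add: cc_vals L_BL PH_def PHS_def)
    next
      case False
      hence vv: "v = pt x (y + 1)" using v ep by auto
      show ?thesis unfolding ph Kf_def madd_msc using vv
        by (simp add: cc_vals L_TL PH_def PHS_def)
    qed
  next
    case 4
    have ep: "endpoints z = {pt (x + 1) y, pt (x + 1) (y + 1)}" using 4 by auto
    note rc = RE_cases[OF x, of y]
    show ?thesis
    proof (cases "v = pt (x + 1) y")
      case True
      show ?thesis unfolding Kf_def madd_msc using True rc 4
        by (simp add: cc_vals PH_def[of a b "Hor x y"] PHS_def[of a b "Hor x y"] fun_eq_iff)
    next
      case False
      hence vv: "v = pt (x + 1) (y + 1)" using v ep by auto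
      show ?thesis unfolding Kf_def madd_msc using vv rc 4
        by (simp add: cc_vals PH_def[of a b "Hor x (y + 1)"] PHS_def[of a b "Hor x (y + 1)"] fun_eq_iff)
    qed
  qed
qed

lemma exist: "slit_ext a b (PH a b) (PHS a b)"
  unfolding slit_ext_def
proof (intro conjI allI impI ballI)
  fix e assume e: "e \<in> Eslit a b"
  have cg: "PH a b e \<in> CliffGen a b \<and> PHS a b e \<in> CliffGen a b"
    using e
  proof (cases e)
    case (Hor k y) thus ?thesis using e hp_CG[OF ab] by (auto simp: Eslit_def PH_def PHS_def)
  next
    case (Ver x m)
    show ?thesis
    proof (cases "x < b")
      case True thus ?thesis using Ver e L_CG[OF ab] by (auto simp: Eslit_def PH_def PHS_def)
    next
      case False thus ?thesis using Ver e ab R_CG[OF ab, of "b - 1" m] by (auto simp: Eslit_def PH_def PHS_def)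
    qed
  next
    case (SlitM m) thus ?thesis using ab R_CG[OF ab, of "-1" m] by (auto simp: PH_def PHS_def)
  next
    case (SlitP m) thus ?thesis using ab L_CG[OF ab, of 0 m] by (auto simp: PH_def PHS_def)
  qed
  show "PH a b e \<in> CliffGen a b" using cg by blast
  show "PHS a b e \<in> CliffGen a b" using cg by blast
next
  fix k y assume "a \<le> k \<and> k < b"
  show "PH a b (Hor k y) = hor_psi a b psi k y" by (simp add: PH_def)
  show "PHS a b (Hor k y) = hor_psi a b psis k y" by (simp add: PHS_def)
next
  fix x y z1 z2 v
  assume h: "a \<le> x \<and> x < b \<and> z1 \<in> face_edges x y \<and> z2 \<in> face_edges x y \<and> v \<in> endpoints z1 \<and> v \<in> endpoints z2"
  have "madd (PH a b z1) (msc (cc x y v) (PHS a b z1)) = madd (PH a b z2) (msc (cc x y v) (PHS a b z2))"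
    using face_corner h by metis
  thus "let p = face_centre x y; c = \<i> * complex_of_real (cmod (v - p)) / (v - p)
        in madd (PH a b z1) (msc c (PHS a b z1)) = madd (PH a b z2) (msc c (PHS a b z2))"
    by (simp add: Let_def cc_def)
next
  fix m
  show "madd (PH a b (Ver a m)) (msc \<i> (PHS a b (Ver a m))) = mzero"
    using ab bdry_L[OF ab, of a m] by (auto simp: PH_def PHS_def madd_msc mzero_def fun_eq_iff)
next
  fix m :: int assume m: "m < 0"
  show "madd (PH a b (SlitP m)) (msc \<i> (PHS a b (SlitP m))) = mzero"
    using m bdry_L[OF ab, of 0 m] by (auto simp: PH_def PHS_def madd_msc mzero_def fun_eq_iff)
next
  fix m
  show "madd (PH a b (Ver b m)) (msc (- \<i>) (PHS a b (Ver b m))) = mzero"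
    using ab bdry_R[OF ab, of "b - 1" m] by (auto simp: PH_def PHS_def madd_msc mzero_def fun_eq_iff)
next
  fix m :: int assume m: "m < 0"
  show "madd (PH a b (SlitM m)) (msc (- \<i>) (PHS a b (SlitM m))) = mzero"
    using m bdry_R[OF ab, of "-1" m] by (auto simp: PH_def PHS_def madd_msc mzero_def fun_eq_iff)
qed

end


lemma face_inst:
  assumes "slit_ext a b ph phs" "a \<le> x" "x < b" "z1 \<in> face_edges x y" "z2 \<in> face_edges x y"
    "v \<in> endpoints z1" "v \<in> endpoints z2"
  shows "madd (ph z1) (msc (cc x y v) (phs z1)) = madd (ph z2) (msc (cc x y v) (phs z2))"
proof -
  have "\<forall>x y z1 z2 v. a \<le> x \<and> x < b \<and> z1 \<in> face_edges x y \<and> z2 \<in> face_edges x y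
        \<and> v \<in> endpoints z1 \<and> v \<in> endpoints z2 \<longrightarrow>
        madd (ph z1) (msc (cc x y v) (phs z1)) = madd (ph z2) (msc (cc x y v) (phs z2))"
    using assms(1) unfolding slit_ext_def Let_def cc_def by blast
  thus ?thesis using assms(2-) by blast
qed

lemma hor_val:
  assumes "slit_ext a b ph phs" "a \<le> k" "k < b"
  shows "ph (Hor k y) = hor_psi a b psi k y" "phs (Hor k y) = hor_psi a b psis k y"
  using assms unfolding slit_ext_def by blast+

lemma two_c:
  fixes f g f' g' :: op
  assumes "\<And>\<tau> \<rho>. f \<tau> \<rho> + c1 * g \<tau> \<rho> = f' \<tau> \<rho> + c1 * g' \<tau> \<rho>"
    "\<And>\<tau> \<rho>. f \<tau> \<rho> + c2 * g \<tau> \<rho> = f' \<tau> \<rho> + c2 * g' \<tau> \<rho>" "c1 \<noteq> c2"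
  shows "f = f' \<and> g = g'"
proof -
  have g: "g = g'"
  proof (intro ext)
    fix \<tau> \<rho>
    have d: "(f \<tau> \<rho> + c1 * g \<tau> \<rho>) - (f \<tau> \<rho> + c2 * g \<tau> \<rho>) = (f' \<tau> \<rho> + c1 * g' \<tau> \<rho>) - (f' \<tau> \<rho> + c2 * g' \<tau> \<rho>)"
      using assms(1)[of \<tau> \<rho>] assms(2)[of \<tau> \<rho>] by simp
    have "(c1 - c2) * (g \<tau> \<rho> - g' \<tau> \<rho>) = (f \<tau> \<rho> + c1 * g \<tau> \<rho>) - (f \<tau> \<rho> + c2 * g \<tau> \<rho>) - ((f' \<tau> \<rho> + c1 * g' \<tau> \<rho>) - (f' \<tau> \<rho> + c2 * g' \<tau> \<rho>))"
      by (simp add: algebra_simps)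
    hence "(c1 - c2) * (g \<tau> \<rho> - g' \<tau> \<rho>) = 0" using d by simp
    thus "g \<tau> \<rho> = g' \<tau> \<rho>" using assms(3) by simp
  qed
  have f: "f = f'"
  proof (intro ext)
    fix \<tau> \<rho> show "f \<tau> \<rho> = f' \<tau> \<rho>" using assms(1)[of \<tau> \<rho>] g by simp
  qed
  show ?thesis using f g by simp
qed

lemma uniq_edge:
  assumes S1: "slit_ext a b ph phs" and S2: "slit_ext a b ph' phs'" and x: "a \<le> x" "x < b"
    and e: "e \<in> face_edges x y"
    and v1: "v1 \<in> endpoints e" "v1 \<in> endpoints (Hor x y1)" "Hor x y1 \<in> face_edges x y"
    and v2: "v2 \<in> endpoints e" "v2 \<in> endpoints (Hor x y2)" "Hor x y2 \<in> face_edges x y"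
    and c: "cc x y v1 \<noteq> cc x y v2"
  shows "ph' e = ph e \<and> phs' e = phs e"
proof -
  have h1: "ph (Hor x y1) = ph' (Hor x y1)" "phs (Hor x y1) = phs' (Hor x y1)"
    "ph (Hor x y2) = ph' (Hor x y2)" "phs (Hor x y2) = phs' (Hor x y2)"
    using hor_val[OF S1 x] hor_val[OF S2 x] by auto
  have a1: "madd (ph e) (msc (cc x y v1) (phs e)) = madd (ph' e) (msc (cc x y v1) (phs' e))"
    using face_inst[OF S1 x e v1(3) v1(1,2)] face_inst[OF S2 x e v1(3) v1(1,2)] h1 by simp
  have a2: "madd (ph e) (msc (cc x y v2) (phs e)) = madd (ph' e) (msc (cc x y v2) (phs' e))"
    using face_inst[OF S1 x e v2(3) v2(1,2)] face_inst[OF S2 x e v2(3) v2(1,2)] h1 by simp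
  have "ph e = ph' e \<and> phs e = phs' e"
  proof (rule two_c[OF _ _ c])
    fix \<tau> \<rho>
    show "ph e \<tau> \<rho> + cc x y v1 * phs e \<tau> \<rho> = ph' e \<tau> \<rho> + cc x y v1 * phs' e \<tau> \<rho>"
      using fun_cong[OF fun_cong[OF a1], of \<tau> \<rho>] by (simp add: madd_msc)
    show "ph e \<tau> \<rho> + cc x y v2 * phs e \<tau> \<rho> = ph' e \<tau> \<rho> + cc x y v2 * phs' e \<tau> \<rho>"
      using fun_cong[OF fun_cong[OF a2], of \<tau> \<rho>] by (simp add: madd_msc)
  qed
  thus ?thesis by simp
qed

lemma uniq:
  assumes ab: "a < 0" "0 < b" and S1: "slit_ext a b ph phs" and S2: "slit_ext a b ph' phs'"
    and e: "e \<in> Eslit a b"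
  shows "ph' e = ph e \<and> phs' e = phs e"
proof (cases e)
  case (Hor k y)
  hence k: "a \<le> k" "k < b" using e by (auto simp: Eslit_def)
  show ?thesis using hor_val[OF S1 k] hor_val[OF S2 k] Hor by simp
next
  case (Ver x m)
  hence xm: "a \<le> x" "x \<le> b" "\<not> (x = 0 \<and> m < 0)" using e by (auto simp: Eslit_def)
  show ?thesis
  proof (cases "x < b")
    case True
    show ?thesis unfolding Ver
      by (rule uniq_edge[OF S1 S2 xm(1) True, of _ m "pt x m" m "pt x (m + 1)" "m + 1"])
         (use xm cc_vals[of x m] cBL_cTL in \<open>auto simp: face_edges_def\<close>)
  next
    case False
    hence xb: "x = b" using xm by simp
    have b1: "a \<le> b - 1" "b - 1 < b" using ab by auto
    have bb: "b - 1 + 1 = b" by simp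
    have cv: "cc (b - 1) m (pt b m) = cBR" "cc (b - 1) m (pt b (m + 1)) = cTR"
      using cc_vals(2,4)[of "b - 1" m] unfolding bb by auto
    show ?thesis unfolding Ver xb
      by (rule uniq_edge[OF S1 S2 b1, of _ m "pt b m" m "pt b (m + 1)" "m + 1"])
         (use ab cv cBR_cTR in \<open>auto simp: face_edges_def\<close>)
  qed
next
  case (SlitM m)
  hence m: "m < 0" using e by (auto simp: Eslit_def)
  have b1: "a \<le> -1" "-1 < b" using ab by auto
  have cv: "cc (-1) m (pt 0 m) = cBR" "cc (-1) m (pt 0 (m + 1)) = cTR"
    using cc_vals(2,4)[of "-1" m] by auto
  show ?thesis unfolding SlitM
    by (rule uniq_edge[OF S1 S2 b1, of _ m "pt 0 m" m "pt 0 (m + 1)" "m + 1"])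
       (use m cv cBR_cTR in \<open>auto simp: face_edges_def\<close>)
next
  case (SlitP m)
  hence m: "m < 0" using e by (auto simp: Eslit_def)
  have b1: "a \<le> 0" "0 < b" using ab by auto
  have cv: "cc 0 m (pt 0 m) = cBL" "cc 0 m (pt 0 (m + 1)) = cTL"
    using cc_vals(1,3)[of 0 m] by auto
  show ?thesis unfolding SlitP
    by (rule uniq_edge[OF S1 S2 b1, of _ m "pt 0 m" m "pt 0 (m + 1)" "m + 1"])
       (use m cv cBL_cTL in \<open>auto simp: face_edges_def\<close>)
qed

theorem proposition3p15:
  fixes a b :: int
  assumes "a < 0" and "0 < b"
  shows "\<exists>ph phs. slit_ext a b ph phs \<and>
           (\<forall>ph' phs'. slit_ext a b ph' phs' \<longrightarrow>
              (\<forall>e\<in>Eslit a b. ph' e = ph e \<and> phs' e = phs e))"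
proof (intro exI conjI allI impI ballI)
  show "slit_ext a b (PH a b) (PHS a b)" by (rule exist[OF assms])
  fix ph' phs' e assume "slit_ext a b ph' phs'" "e \<in> Eslit a b"
  thus "ph' e = PH a b e" "phs' e = PHS a b e"
    using uniq[OF assms exist[OF assms]] by blast+
qed


end
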